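(* Let $R$ be a Noetherian local ring, $F=\{J_n\}_{n\ge0}$ a Noetherian filtration of ideals and $I$ an ideal of $R$. Then $\operatorname{ar}_F(I)=d(\operatorname{in}_F(I))$.
   Context: A filtration $F=\{J_n\}$ satisfies $J_0=R$, $J_m\subseteq J_n$ for $m>n$, $J_mJ_n\subseteq J_{m+n}$; it is Noetherian if $\Re_F(R)=\bigoplus_nJ_n$ is Noetherian. $\operatorname{gr}_F(R)=\bigoplus_nJ_n/J_{n+1}$; for $0\ne f\in J_n\setminus J_{n+1}$, $f^*$ is its class in $J_n/J_{n+1}$, $0^*=0$, and $\operatorname{in}_F(I)$ is the ideal of $\operatorname{gr}_F(R)$ generated by $f^*$, $f\in I$. For a graded ideal $Q$, $d(Q)$ is the maximum degree of the elements of a minimal homogeneous generating set of $Q$. $\operatorname{ar}_F(I)=d\big(\bigoplus_n(J_n\cap I)\big)$, computed in $\Re_F(R)$. *)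

theory Defs
  imports "HOL-Computational_Algebra.Polynomial" "HOL-Library.Set_Algebras"
begin

definition is_ideal :: "'a::comm_ring_1 set \<Rightarrow> bool" where
  "is_ideal I \<longleftrightarrow> 0 \<in> I \<and> (\<forall>x\<in>I. \<forall>y\<in>I. x + y \<in> I) \<and> (\<forall>r x. x \<in> I \<longrightarrow> r * x \<in> I)"

definition sub_gen :: "'b::comm_ring_1 set \<Rightarrow> 'b set \<Rightarrow> 'b set" where
  "sub_gen S G = {x. \<exists>G' c. finite G' \<and> G' \<subseteq> G \<and> (\<forall>g\<in>G'. c g \<in> S) \<and> x = (\<Sum>g\<in>G'. c g * g)}"

definition sub_ideal :: "'b::comm_ring_1 set \<Rightarrow> 'b set \<Rightarrow> bool" where
  "sub_ideal S A \<longleftrightarrow> A \<subseteq> S \<and> 0 \<in> A \<and> (\<forall>x\<in>A. \<forall>y\<in>A. x + y \<in> A)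
     \<and> (\<forall>r\<in>S. \<forall>x\<in>A. r * x \<in> A)"

definition noetherian_sub :: "'b::comm_ring_1 set \<Rightarrow> bool" where
  "noetherian_sub S \<longleftrightarrow> (\<forall>A. sub_ideal S A \<longrightarrow> (\<exists>G. finite G \<and> G \<subseteq> A \<and> sub_gen S G = A))"

definition noetherian_ring :: "'a::comm_ring_1 itself \<Rightarrow> bool" where
  "noetherian_ring _ \<longleftrightarrow> noetherian_sub (UNIV :: 'a set)"

definition maximal_ideal :: "'a::comm_ring_1 set \<Rightarrow> bool" where
  "maximal_ideal m \<longleftrightarrow> is_ideal m \<and> m \<noteq> UNIV \<and>
     (\<forall>I. is_ideal I \<longrightarrow> m \<subseteq> I \<longrightarrow> I = m \<or> I = UNIV)"

definition local_ring :: "'a::comm_ring_1 itself \<Rightarrow> bool" where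
  "local_ring _ \<longleftrightarrow> (\<exists>!m::'a set. maximal_ideal m)"

definition filtration :: "(nat \<Rightarrow> 'a::comm_ring_1 set) \<Rightarrow> bool" where
  "filtration J \<longleftrightarrow> (\<forall>n. is_ideal (J n)) \<and> J 0 = UNIV \<and> (\<forall>m n. n < m \<longrightarrow> J m \<subseteq> J n)
     \<and> (\<forall>m n x y. x \<in> J m \<longrightarrow> y \<in> J n \<longrightarrow> x * y \<in> J (m + n))"

text \<open>Rees algebra R_F(R) = (+)_n J_n t^n, as a subring of R[t].\<close>
definition rees :: "(nat \<Rightarrow> 'a::comm_ring_1 set) \<Rightarrow> 'a poly set" where
  "rees J = {p. \<forall>n. coeff p n \<in> J n}"

definition noetherian_filtration :: "(nat \<Rightarrow> 'a::comm_ring_1 set) \<Rightarrow> bool" where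
  "noetherian_filtration J \<longleftrightarrow> filtration J \<and> noetherian_sub (rees J)"

definition rees_part :: "(nat \<Rightarrow> 'a::comm_ring_1 set) \<Rightarrow> 'a set \<Rightarrow> 'a poly set" where
  "rees_part J I = {p \<in> rees J. \<forall>n. coeff p n \<in> I}"

definition rees_min_hgens :: "(nat \<Rightarrow> 'a::comm_ring_1 set) \<Rightarrow> 'a poly set \<Rightarrow> 'a poly set \<Rightarrow> bool" where
  "rees_min_hgens J A G \<longleftrightarrow> G \<subseteq> A \<and> (\<forall>g\<in>G. g \<noteq> 0 \<and> (\<exists>c n. g = monom c n))
     \<and> sub_gen (rees J) G = A \<and> (\<forall>G'. G' \<subset> G \<longrightarrow> sub_gen (rees J) G' \<noteq> A)"

definition d_rees :: "(nat \<Rightarrow> 'a::comm_ring_1 set) \<Rightarrow> 'a poly set \<Rightarrow> nat" where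
  "d_rees J A = (let G = (SOME G. rees_min_hgens J A G) in
      if G = {} then 0 else Max (degree ` G))"

definition ar :: "(nat \<Rightarrow> 'a::comm_ring_1 set) \<Rightarrow> 'a set \<Rightarrow> nat" where
  "ar J I = d_rees J (rees_part J I)"

text \<open>An element is a family of cosets g n \<in> J_n/J_(n+1), almost all zero (= J_(n+1)).\<close>
definition gr :: "(nat \<Rightarrow> 'a::comm_ring_1 set) \<Rightarrow> (nat \<Rightarrow> 'a set) set" where
  "gr J = {g. (\<forall>n. \<exists>x\<in>J n. g n = x +o J (Suc n)) \<and> finite {n. g n \<noteq> J (Suc n)}}"

definition gr_zero :: "(nat \<Rightarrow> 'a::comm_ring_1 set) \<Rightarrow> nat \<Rightarrow> 'a set" where
  "gr_zero J = (\<lambda>n. J (Suc n))"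

definition gr_mul :: "(nat \<Rightarrow> 'a::comm_ring_1 set) \<Rightarrow> (nat \<Rightarrow> 'a set) \<Rightarrow> (nat \<Rightarrow> 'a set) \<Rightarrow> nat \<Rightarrow> 'a set" where
  "gr_mul J g h = (\<lambda>n. (\<Sum>i\<le>n. g i * h (n - i)) + J (Suc n))"

definition gr_gen :: "(nat \<Rightarrow> 'a::comm_ring_1 set) \<Rightarrow> (nat \<Rightarrow> 'a set) set \<Rightarrow> (nat \<Rightarrow> 'a set) set" where
  "gr_gen J T = {x. \<exists>T' c. finite T' \<and> T' \<subseteq> T \<and> (\<forall>t\<in>T'. c t \<in> gr J)
      \<and> x = (\<lambda>n. (\<Sum>t\<in>T'. gr_mul J (c t) t n) + J (Suc n))}"

text \<open>Initial form f^*: the class of f in J_n/J_(n+1) where f \<in> J_n - J_(n+1);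
  0^* = 0, and (convention) f^* = 0 if f lies in every J_n.\<close>
definition initial :: "(nat \<Rightarrow> 'a::comm_ring_1 set) \<Rightarrow> 'a \<Rightarrow> nat \<Rightarrow> 'a set" where
  "initial J f = (if \<forall>n. f \<in> J n then gr_zero J
     else (let n = (LEAST n. f \<notin> J (Suc n)) in
           (\<lambda>m. if m = n then f +o J (Suc n) else J (Suc m))))"

definition in_F :: "(nat \<Rightarrow> 'a::comm_ring_1 set) \<Rightarrow> 'a set \<Rightarrow> (nat \<Rightarrow> 'a set) set" where
  "in_F J I = gr_gen J (initial J ` I)"

definition gr_homog :: "(nat \<Rightarrow> 'a::comm_ring_1 set) \<Rightarrow> (nat \<Rightarrow> 'a set) \<Rightarrow> nat \<Rightarrow> bool" where
  "gr_homog J g d \<longleftrightarrow> g \<in> gr J \<and> (\<forall>m. m \<noteq> d \<longrightarrow> g m = J (Suc m))"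

definition gr_deg :: "(nat \<Rightarrow> 'a::comm_ring_1 set) \<Rightarrow> (nat \<Rightarrow> 'a set) \<Rightarrow> nat" where
  "gr_deg J g = (LEAST d. g d \<noteq> J (Suc d))"

definition gr_min_hgens :: "(nat \<Rightarrow> 'a::comm_ring_1 set) \<Rightarrow> (nat \<Rightarrow> 'a set) set \<Rightarrow> (nat \<Rightarrow> 'a set) set \<Rightarrow> bool" where
  "gr_min_hgens J Q H \<longleftrightarrow> H \<subseteq> Q \<and> (\<forall>h\<in>H. h \<noteq> gr_zero J \<and> (\<exists>d. gr_homog J h d))
     \<and> gr_gen J H = Q \<and> (\<forall>H'. H' \<subset> H \<longrightarrow> gr_gen J H' \<noteq> Q)"

definition d_gr :: "(nat \<Rightarrow> 'a::comm_ring_1 set) \<Rightarrow> (nat \<Rightarrow> 'a set) set \<Rightarrow> nat" where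
  "d_gr J Q = (let H = (SOME H. gr_min_hgens J Q H) in
      if H = {} then 0 else Max (gr_deg J ` H))"

end

theory Submission
  imports Defs
begin
definition rideal :: "'b::comm_ring_1 set \<Rightarrow> 'b set \<Rightarrow> bool" where
  "rideal S A \<longleftrightarrow> 0 \<in> A \<and> (\<forall>x\<in>A. \<forall>y\<in>A. x + y \<in> A) \<and> (\<forall>r\<in>S. \<forall>x\<in>A. r * x \<in> A)"

lemma rideal_sum:
  assumes "rideal S A" "finite F" "\<And>i. i \<in> F \<Longrightarrow> f i \<in> A"
  shows "sum f F \<in> A"
  using assms(2,3)
proof (induction F rule: finite_induct)
  case empty then show ?case using assms(1) by (simp add: rideal_def)
next
  case (insert x F) then show ?case using assms(1) by (simp add: rideal_def)
qed

lemma sub_gen_zero: "0 \<in> sub_gen S G"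
  unfolding sub_gen_def by (rule CollectI, rule exI[of _ "{}"]) auto

lemma sub_gen_gen: "1 \<in> S \<Longrightarrow> g \<in> G \<Longrightarrow> g \<in> sub_gen S G"
  unfolding sub_gen_def by (rule CollectI, rule exI[of _ "{g}"], rule exI[of _ "\<lambda>_. 1"]) auto

lemma sub_gen_add:
  assumes S: "0 \<in> S" "\<And>x y. x \<in> S \<Longrightarrow> y \<in> S \<Longrightarrow> x + y \<in> S"
    and x: "x \<in> sub_gen S G" and y: "y \<in> sub_gen S G"
  shows "x + y \<in> sub_gen S G"
proof -
  obtain G1 c1 where 1: "finite G1" "G1 \<subseteq> G" "\<forall>g\<in>G1. c1 g \<in> S" "x = (\<Sum>g\<in>G1. c1 g * g)"
    using x unfolding sub_gen_def by blast
  obtain G2 c2 where 2: "finite G2" "G2 \<subseteq> G" "\<forall>g\<in>G2. c2 g \<in> S" "y = (\<Sum>g\<in>G2. c2 g * g)"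
    using y unfolding sub_gen_def by blast
  define c where "c g = (if g \<in> G1 then c1 g else 0) + (if g \<in> G2 then c2 g else 0)" for g
  have "(\<Sum>g\<in>G1 \<union> G2. c g * g) = (\<Sum>g\<in>G1 \<union> G2. (if g \<in> G1 then c1 g * g else 0))
      + (\<Sum>g\<in>G1 \<union> G2. (if g \<in> G2 then c2 g * g else 0))"
    unfolding c_def sum.distrib[symmetric] by (rule sum.cong) (auto simp: distrib_right)
  also have "(\<Sum>g\<in>G1 \<union> G2. (if g \<in> G1 then c1 g * g else 0)) = x"
    using 1 2 by (subst sum.mono_neutral_right[of "G1 \<union> G2" G1]) auto
  also have "(\<Sum>g\<in>G1 \<union> G2. (if g \<in> G2 then c2 g * g else 0)) = y"
    using 1 2 by (subst sum.mono_neutral_right[of "G1 \<union> G2" G2]) auto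
  finally have "x + y = (\<Sum>g\<in>G1 \<union> G2. c g * g)" by simp
  moreover have "\<forall>g\<in>G1 \<union> G2. c g \<in> S" using 1 2 S unfolding c_def by auto
  ultimately show ?thesis unfolding sub_gen_def using 1 2
    by (intro CollectI exI[of _ "G1 \<union> G2"] exI[of _ c]) auto
qed

lemma sub_gen_mult:
  assumes S: "\<And>x y. x \<in> S \<Longrightarrow> y \<in> S \<Longrightarrow> x * y \<in> S"
    and r: "r \<in> S" and x: "x \<in> sub_gen S G"
  shows "r * x \<in> sub_gen S G"
proof -
  obtain G1 c1 where 1: "finite G1" "G1 \<subseteq> G" "\<forall>g\<in>G1. c1 g \<in> S" "x = (\<Sum>g\<in>G1. c1 g * g)"
    using x unfolding sub_gen_def by blast
  have "r * x = (\<Sum>g\<in>G1. (r * c1 g) * g)" using 1 by (simp add: sum_distrib_left mult.assoc)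
  then show ?thesis unfolding sub_gen_def using 1 S r
    by (intro CollectI exI[of _ G1] exI[of _ "\<lambda>g. r * c1 g"]) auto
qed

lemma rideal_sub_gen:
  assumes "0 \<in> S" "\<And>x y. x \<in> S \<Longrightarrow> y \<in> S \<Longrightarrow> x + y \<in> S" "\<And>x y. x \<in> S \<Longrightarrow> y \<in> S \<Longrightarrow> x * y \<in> S"
  shows "rideal S (sub_gen S G)"
  unfolding rideal_def
proof (intro conjI ballI)
  show "0 \<in> sub_gen S G" by (rule sub_gen_zero)
next
  fix x y assume "x \<in> sub_gen S G" "y \<in> sub_gen S G"
  then show "x + y \<in> sub_gen S G" using sub_gen_add[of S x G y] assms(1,2) by blast
next
  fix r x assume "r \<in> S" "x \<in> sub_gen S G"
  then show "r * x \<in> sub_gen S G" using sub_gen_mult[of S r x G] assms(3) by blast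
qed

lemma sub_gen_least:
  assumes A: "rideal S A" and G: "G \<subseteq> A"
  shows "sub_gen S G \<subseteq> A"
proof
  fix x assume "x \<in> sub_gen S G"
  then obtain G1 c1 where 1: "finite G1" "G1 \<subseteq> G" "\<forall>g\<in>G1. c1 g \<in> S" "x = (\<Sum>g\<in>G1. c1 g * g)"
    unfolding sub_gen_def by blast
  show "x \<in> A" unfolding 1(4)
    by (rule rideal_sum[OF A 1(1)]) (use 1 G A in \<open>auto simp: rideal_def\<close>)
qed

lemma sub_gen_mono: "G \<subseteq> G' \<Longrightarrow> sub_gen S G \<subseteq> sub_gen S G'"
  unfolding sub_gen_def by blast

lemma sub_gen_UNIV_rideal: "rideal UNIV (sub_gen (UNIV::'b::comm_ring_1 set) G)"
  by (rule rideal_sub_gen) auto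

lemma sub_gen_UNIV_gen: "g \<in> G \<Longrightarrow> g \<in> sub_gen (UNIV::'b::comm_ring_1 set) G"
  by (rule sub_gen_gen) auto

lemma ideal_0: "is_ideal W \<Longrightarrow> 0 \<in> W" by (simp add: is_ideal_def)
lemma ideal_add: "is_ideal W \<Longrightarrow> x \<in> W \<Longrightarrow> y \<in> W \<Longrightarrow> x + y \<in> W" by (simp add: is_ideal_def)
lemma ideal_mult: "is_ideal W \<Longrightarrow> x \<in> W \<Longrightarrow> r * x \<in> W" by (simp add: is_ideal_def)
lemma ideal_mult2: "is_ideal W \<Longrightarrow> x \<in> W \<Longrightarrow> x * r \<in> W" using ideal_mult[of W x r] by (simp add: mult.commute)
lemma ideal_neg: "is_ideal W \<Longrightarrow> x \<in> W \<Longrightarrow> - x \<in> W"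
  using ideal_mult[of W x "-1"] by simp
lemma ideal_diff: "is_ideal W \<Longrightarrow> x \<in> W \<Longrightarrow> y \<in> W \<Longrightarrow> x - y \<in> W"
  using ideal_add[of W x "-y"] ideal_neg[of W y] by simp
lemma ideal_rideal: "is_ideal W \<Longrightarrow> rideal UNIV W"
  by (simp add: is_ideal_def rideal_def)
lemma rideal_ideal: "rideal UNIV W \<Longrightarrow> is_ideal W"
  by (simp add: is_ideal_def rideal_def)
lemma ideal_sum: "is_ideal W \<Longrightarrow> finite F \<Longrightarrow> (\<And>i. i \<in> F \<Longrightarrow> f i \<in> W) \<Longrightarrow> sum f F \<in> W"
  using rideal_sum ideal_rideal by blast
lemma ideal_sum': "is_ideal W \<Longrightarrow> (\<And>i. i \<in> F \<Longrightarrow> f i \<in> W) \<Longrightarrow> sum f F \<in> W"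
  by (cases "finite F") (auto intro: ideal_sum ideal_0)
lemma ideal_one: "is_ideal W \<Longrightarrow> 1 \<in> W \<Longrightarrow> W = UNIV"
  using ideal_mult[of W 1] by force
lemma sub_gen_UNIV_ideal: "is_ideal (sub_gen UNIV G)"
  by (rule rideal_ideal, rule sub_gen_UNIV_rideal)

section \<open>Cosets\<close>

lemma coset_eq_iff:
  assumes "is_ideal W"
  shows "(a +o W = b +o W) \<longleftrightarrow> a - b \<in> W"
proof
  assume h: "a +o W = b +o W"
  have "a \<in> a +o W" using ideal_0[OF assms] by (force simp: elt_set_plus_def)
  then have "a \<in> b +o W" using h by simp
  then obtain w where "w \<in> W" "a = b + w" by (auto simp: elt_set_plus_def)
  then show "a - b \<in> W" by simp
next
  assume h: "a - b \<in> W"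
  show "a +o W = b +o W"
  proof (intro set_eqI iffI)
    fix x assume "x \<in> a +o W"
    then obtain w where w: "w \<in> W" "x = a + w" by (auto simp: elt_set_plus_def)
    have "x = b + ((a - b) + w)" using w by simp
    moreover have "(a - b) + w \<in> W" using ideal_add[OF assms h w(1)] .
    ultimately show "x \<in> b +o W" unfolding elt_set_plus_def by blast
  next
    fix x assume "x \<in> b +o W"
    then obtain w where w: "w \<in> W" "x = b + w" by (auto simp: elt_set_plus_def)
    have "x = a + (w - (a - b))" using w by simp
    moreover have "w - (a - b) \<in> W" using ideal_diff[OF assms w(1) h] .
    ultimately show "x \<in> a +o W" unfolding elt_set_plus_def by blast
  qed
qed

lemma coset_self: "is_ideal W \<Longrightarrow> a \<in> a +o W"
  using ideal_0 by (force simp: elt_set_plus_def)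

lemma coset_zero: "is_ideal W \<Longrightarrow> 0 +o W = W"
  by (auto simp: elt_set_plus_def)

lemma coset_eq_ideal: "is_ideal W \<Longrightarrow> (a +o W = W) \<longleftrightarrow> a \<in> W"
  using coset_eq_iff[of W a 0] coset_zero[of W] by simp

lemma coset_plus_ideal: "is_ideal W \<Longrightarrow> (a +o W) + W = a +o W"
proof (intro set_eqI iffI)
  fix x assume W: "is_ideal W" and "x \<in> (a +o W) + W"
  then obtain y w where "y \<in> a +o W" "w \<in> W" "x = y + w" by (auto elim: set_plus_elim)
  then obtain v where "v \<in> W" "x = a + (v + w)" by (auto simp: elt_set_plus_def)
  then show "x \<in> a +o W" using ideal_add[OF W] \<open>w \<in> W\<close> by (auto simp: elt_set_plus_def)
next
  fix x assume W: "is_ideal W" and "x \<in> a +o W"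
  then have "x + 0 \<in> (a +o W) + W" using ideal_0[OF W] by (intro set_plus_intro) auto
  then show "x \<in> (a +o W) + W" by simp
qed

lemma sum_sets_coset:
  assumes W: "is_ideal W" and F: "finite F"
    and h: "\<And>s. s \<in> F \<Longrightarrow> x s \<in> X s \<and> X s \<subseteq> x s +o W"
  shows "sum x F \<in> sum X F \<and> sum X F \<subseteq> sum x F +o W"
  using F h
proof (induction F rule: finite_induct)
  case empty
  then show ?case using ideal_0[OF W] by (auto simp: elt_set_plus_def)
next
  case (insert s F)
  then have IH: "sum x F \<in> sum X F" "sum X F \<subseteq> sum x F +o W" and hs: "x s \<in> X s" "X s \<subseteq> x s +o W"
    by auto
  have "x s + sum x F \<in> X s + sum X F" using IH hs by (intro set_plus_intro)
  moreover have "X s + sum X F \<subseteq> (x s + sum x F) +o W"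
  proof
    fix z assume "z \<in> X s + sum X F"
    then obtain u v where uv: "u \<in> X s" "v \<in> sum X F" "z = u + v" by (auto elim: set_plus_elim)
    obtain w1 where w1: "w1 \<in> W" "u = x s + w1" using uv hs by (auto simp: elt_set_plus_def)
    obtain w2 where w2: "w2 \<in> W" "v = sum x F + w2" using uv IH by (auto simp: elt_set_plus_def)
    have "z = (x s + sum x F) + (w1 + w2)" using uv w1 w2 by (simp add: algebra_simps)
    then show "z \<in> (x s + sum x F) +o W" using ideal_add[OF W w1(1) w2(1)] by (auto simp: elt_set_plus_def)
  qed
  ultimately show ?case using insert by simp
qed

lemma sum_sets_coset_eq:
  assumes W: "is_ideal W" and F: "finite F"
    and h: "\<And>s. s \<in> F \<Longrightarrow> x s \<in> X s \<and> X s \<subseteq> x s +o W"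
  shows "sum X F + W = sum x F +o W"
proof -
  have S: "sum x F \<in> sum X F \<and> sum X F \<subseteq> sum x F +o W"
    by (rule sum_sets_coset[OF W F]) (rule h)
  show ?thesis
  proof (intro set_eqI iffI)
    fix z assume "z \<in> sum X F + W"
    then obtain u w where "u \<in> sum X F" "w \<in> W" "z = u + w" by (auto elim: set_plus_elim)
    then have "z \<in> (sum x F +o W) + W" using S by (auto intro: set_plus_intro)
    then show "z \<in> sum x F +o W" using coset_plus_ideal[OF W] by simp
  next
    fix z assume "z \<in> sum x F +o W"
    then show "z \<in> sum X F + W" using S by (auto simp: elt_set_plus_def intro: set_plus_intro)
  qed
qed

section \<open>Filtrations and the Rees algebra\<close>

context
  fixes J :: "nat \<Rightarrow> 'a::comm_ring_1 set"
  assumes F: "filtration J"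
begin

lemma J_ideal: "is_ideal (J n)" using F by (simp add: filtration_def)
lemma J_0: "J 0 = UNIV" using F by (simp add: filtration_def)
lemma J_mono: "n \<le> m \<Longrightarrow> J m \<subseteq> J n"
  using F unfolding filtration_def by (metis order_le_less subset_refl)
lemma J_mult: "x \<in> J m \<Longrightarrow> y \<in> J n \<Longrightarrow> x * y \<in> J (m + n)"
  using F by (simp add: filtration_def)
lemma J_mem_mono: "x \<in> J m \<Longrightarrow> n \<le> m \<Longrightarrow> x \<in> J n"
  using J_mono by blast

lemma rees_monom: "monom c n \<in> rees J \<longleftrightarrow> c \<in> J n"
  by (auto simp: rees_def coeff_monom ideal_0[OF J_ideal] split: if_splits)

lemma rees_0: "0 \<in> rees J" by (simp add: rees_def ideal_0[OF J_ideal])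
lemma rees_1: "1 \<in> rees J" by (simp add: rees_def coeff_1 J_0 ideal_0[OF J_ideal])
lemma rees_add: "p \<in> rees J \<Longrightarrow> q \<in> rees J \<Longrightarrow> p + q \<in> rees J"
  by (simp add: rees_def ideal_add[OF J_ideal])
lemma rees_mult: "p \<in> rees J \<Longrightarrow> q \<in> rees J \<Longrightarrow> p * q \<in> rees J"
proof -
  assume p: "p \<in> rees J" and q: "q \<in> rees J"
  have "coeff (p * q) n \<in> J n" for n
  proof -
    have "coeff p i * coeff q (n - i) \<in> J n" if "i \<le> n" for i
      using J_mult[of "coeff p i" i "coeff q (n - i)" "n - i"] p q that by (simp add: rees_def)
    then show ?thesis unfolding coeff_mult by (intro ideal_sum[OF J_ideal]) auto
  qed
  then show ?thesis by (simp add: rees_def)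
qed

lemma rideal_rees_sub_gen: "rideal (rees J) (sub_gen (rees J) G)"
  by (rule rideal_sub_gen) (auto intro: rees_0 rees_add rees_mult)

lemma sub_gen_rees_gen: "g \<in> G \<Longrightarrow> g \<in> sub_gen (rees J) G"
  by (rule sub_gen_gen[OF rees_1])

end

definition phi :: "(nat \<Rightarrow> 'a::comm_ring_1 set) \<Rightarrow> 'a poly \<Rightarrow> nat \<Rightarrow> 'a set" where
  "phi J p = (\<lambda>n. coeff p n +o J (Suc n))"

definition Kr :: "(nat \<Rightarrow> 'a::comm_ring_1 set) \<Rightarrow> 'a poly set" where
  "Kr J = {p. \<forall>n. coeff p n \<in> J (Suc n)}"

context
  fixes J :: "nat \<Rightarrow> 'a::comm_ring_1 set"
  assumes F: "filtration J"
begin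

lemma phi_gr: "p \<in> rees J \<Longrightarrow> phi J p \<in> gr J"
proof -
  assume p: "p \<in> rees J"
  have "{n. phi J p n \<noteq> J (Suc n)} \<subseteq> {..degree p}"
  proof
    fix n assume "n \<in> {n. phi J p n \<noteq> J (Suc n)}"
    then have "coeff p n \<noteq> 0" using coset_zero[OF J_ideal[OF F]] by (auto simp: phi_def)
    then show "n \<in> {..degree p}" using le_degree by auto
  qed
  then have "finite {n. phi J p n \<noteq> J (Suc n)}" using finite_subset by blast
  then show ?thesis using p unfolding gr_def rees_def phi_def by blast
qed

lemma phi_eq: "phi J p = phi J q \<longleftrightarrow> p - q \<in> Kr J"
  unfolding phi_def Kr_def fun_eq_iff using coset_eq_iff[OF J_ideal[OF F]] by simp

lemma Kr_rees: "Kr J \<subseteq> rees J"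
  unfolding Kr_def rees_def using J_mono[OF F, of n "Suc n" for n] by auto

lemma rideal_Kr: "rideal (rees J) (Kr J)"
proof -
  have "coeff (r * p) n \<in> J (Suc n)" if r: "r \<in> rees J" and p: "p \<in> Kr J" for r p n
  proof -
    have "coeff r i * coeff p (n - i) \<in> J (Suc n)" if "i \<le> n" for i
      using J_mult[OF F, of "coeff r i" i "coeff p (n - i)" "Suc (n - i)"] r p that
      by (simp add: rees_def Kr_def)
    then show ?thesis unfolding coeff_mult by (intro ideal_sum[OF J_ideal[OF F]]) auto
  qed
  then show ?thesis unfolding rideal_def
    by (auto simp: Kr_def ideal_0[OF J_ideal[OF F]] ideal_add[OF J_ideal[OF F]])
qed

lemma Kr_phi: "k \<in> Kr J \<Longrightarrow> phi J (p + k) = phi J p"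
  using phi_eq by simp

lemma gr_surj: "g \<in> gr J \<Longrightarrow> \<exists>p\<in>rees J. phi J p = g"
proof -
  assume g: "g \<in> gr J"
  then have rep: "\<forall>n. \<exists>x\<in>J n. g n = x +o J (Suc n)" and fin: "finite {n. g n \<noteq> J (Suc n)}"
    by (auto simp: gr_def)
  define S where "S = {n. g n \<noteq> J (Suc n)}"
  have "\<forall>n. \<exists>y. y \<in> J n \<and> g n = y +o J (Suc n)" using rep by blast
  then obtain x where x: "\<And>n. x n \<in> J n \<and> g n = x n +o J (Suc n)" by (metis choice)
  define p where "p = (\<Sum>n\<in>S. monom (x n) n)"
  have cp: "coeff p k = (if k \<in> S then x k else 0)" for k
    using fin unfolding p_def S_def by (simp add: coeff_sum coeff_monom)
  have "p \<in> rees J" unfolding rees_def using x ideal_0[OF J_ideal[OF F]] by (auto simp: cp)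
  moreover have "phi J p = g"
  proof
    fix k show "phi J p k = g k"
    proof (cases "k \<in> S")
      case True then show ?thesis using x by (simp add: phi_def cp)
    next
      case False then show ?thesis using coset_zero[OF J_ideal[OF F]] by (simp add: phi_def cp S_def)
    qed
  qed
  ultimately show ?thesis by blast
qed

lemma coset_times_sub:
  assumes a: "a \<in> J i" and b: "b \<in> J j"
  shows "(a +o J (Suc i)) * (b +o J (Suc j)) \<subseteq> (a * b) +o J (Suc (i + j))"
proof
  fix z assume "z \<in> (a +o J (Suc i)) * (b +o J (Suc j))"
  then obtain u v where uv: "u \<in> J (Suc i)" "v \<in> J (Suc j)" "z = (a + u) * (b + v)"
    by (auto elim!: set_times_elim simp: elt_set_plus_def)
  have 1: "a * v \<in> J (Suc (i + j))" using J_mult[OF F a uv(2)] by simp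
  have 2: "u * b \<in> J (Suc (i + j))" using J_mult[OF F uv(1) b] by simp
  have 3: "u * v \<in> J (Suc (i + j))"
    using J_mult[OF F uv(1) uv(2)] J_mono[OF F, of "Suc (i+j)" "Suc i + Suc j"] by auto
  have "z = a * b + (a * v + u * b + u * v)" using uv by (simp add: algebra_simps)
  moreover have "a * v + u * b + u * v \<in> J (Suc (i + j))"
    using 1 2 3 ideal_add[OF J_ideal[OF F]] by blast
  ultimately show "z \<in> (a * b) +o J (Suc (i + j))" unfolding elt_set_plus_def by blast
qed

lemma phi_mult:
  assumes p: "p \<in> rees J" and q: "q \<in> rees J"
  shows "gr_mul J (phi J p) (phi J q) = phi J (p * q)"
proof
  fix n
  have "(\<Sum>i\<le>n. phi J p i * phi J q (n - i)) + J (Suc n)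
      = (\<Sum>i\<le>n. coeff p i * coeff q (n - i)) +o J (Suc n)"
  proof (rule sum_sets_coset_eq[OF J_ideal[OF F]])
    fix i assume i: "i \<in> {..n}"
    have pi: "coeff p i \<in> J i" and qi: "coeff q (n - i) \<in> J (n - i)" using p q by (auto simp: rees_def)
    have "coeff p i * coeff q (n - i) \<in> phi J p i * phi J q (n - i)"
      unfolding phi_def by (intro set_times_intro coset_self J_ideal[OF F])
    moreover have "phi J p i * phi J q (n - i) \<subseteq> (coeff p i * coeff q (n - i)) +o J (Suc n)"
      using coset_times_sub[OF pi qi] i unfolding phi_def by simp
    ultimately show "coeff p i * coeff q (n - i) \<in> phi J p i * phi J q (n - i) \<and>
          phi J p i * phi J q (n - i) \<subseteq> (coeff p i * coeff q (n - i)) +o J (Suc n)" by blast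
  qed simp
  then show "gr_mul J (phi J p) (phi J q) n = phi J (p * q) n"
    unfolding gr_mul_def by (simp add: phi_def coeff_mult)
qed

lemma GG:
  assumes rho: "\<And>t. t \<in> T \<Longrightarrow> \<rho> t \<in> rees J \<and> phi J (\<rho> t) = t"
    and T': "finite T'" "T' \<subseteq> T" and q: "\<And>t. t \<in> T' \<Longrightarrow> q t \<in> rees J"
  shows "(\<lambda>n. (\<Sum>t\<in>T'. gr_mul J (phi J (q t)) t n) + J (Suc n)) = phi J (\<Sum>t\<in>T'. q t * \<rho> t)"
proof
  fix n
  have e: "gr_mul J (phi J (q t)) t n = coeff (q t * \<rho> t) n +o J (Suc n)" if "t \<in> T'" for t
  proof -
    have "gr_mul J (phi J (q t)) t = gr_mul J (phi J (q t)) (phi J (\<rho> t))" using rho T' that by auto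
    also have "\<dots> = phi J (q t * \<rho> t)" by (rule phi_mult) (use q rho T' that in auto)
    finally show ?thesis by (simp add: phi_def)
  qed
  have "(\<Sum>t\<in>T'. gr_mul J (phi J (q t)) t n) + J (Suc n) = (\<Sum>t\<in>T'. coeff (q t * \<rho> t) n) +o J (Suc n)"
    by (rule sum_sets_coset_eq[OF J_ideal[OF F] T'(1)]) (simp add: e coset_self[OF J_ideal[OF F]])
  then show "(\<Sum>t\<in>T'. gr_mul J (phi J (q t)) t n) + J (Suc n) = phi J (\<Sum>t\<in>T'. q t * \<rho> t) n"
    by (simp add: phi_def coeff_sum)
qed

lemma gr_gen_phi:
  assumes rho: "\<And>t. t \<in> T \<Longrightarrow> \<rho> t \<in> rees J \<and> phi J (\<rho> t) = t"
  shows "gr_gen J T = phi J ` sub_gen (rees J) (\<rho> ` T)"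
proof -
  have inj: "inj_on \<rho> T"
  proof (rule inj_onI)
    fix s t assume "s \<in> T" "t \<in> T" "\<rho> s = \<rho> t"
    have "s = phi J (\<rho> s)" using rho[of s] \<open>s \<in> T\<close> by simp
    also have "\<dots> = phi J (\<rho> t)" using \<open>\<rho> s = \<rho> t\<close> by simp
    also have "\<dots> = t" using rho[of t] \<open>t \<in> T\<close> by simp
    finally show "s = t" .
  qed
  show ?thesis
  proof (intro set_eqI iffI)
    fix x assume "x \<in> gr_gen J T"
    then have "\<exists>T' c. finite T' \<and> T' \<subseteq> T \<and> (\<forall>t\<in>T'. c t \<in> gr J)
      \<and> x = (\<lambda>n. (\<Sum>t\<in>T'. gr_mul J (c t) t n) + J (Suc n))" unfolding gr_gen_def by simp
    then obtain T' c where T': "finite T'" "T' \<subseteq> T" "\<forall>t\<in>T'. c t \<in> gr J"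
      and x: "x = (\<lambda>n. (\<Sum>t\<in>T'. gr_mul J (c t) t n) + J (Suc n))"
      by (elim exE conjE)
    have "\<forall>t\<in>T'. \<exists>p. p \<in> rees J \<and> phi J p = c t" using gr_surj T'(3) by blast
    from bchoice[OF this] obtain q where q0: "\<forall>t\<in>T'. q t \<in> rees J \<and> phi J (q t) = c t"
      by (elim exE)
    then have q: "\<And>t. t \<in> T' \<Longrightarrow> q t \<in> rees J \<and> phi J (q t) = c t" by simp
    have "x = (\<lambda>n. (\<Sum>t\<in>T'. gr_mul J (phi J (q t)) t n) + J (Suc n))"
    proof (rule ext)
      fix n
      have "(\<Sum>t\<in>T'. gr_mul J (c t) t n) = (\<Sum>t\<in>T'. gr_mul J (phi J (q t)) t n)"
        by (rule sum.cong[OF refl]) (simp add: q)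
      then show "x n = (\<Sum>t\<in>T'. gr_mul J (phi J (q t)) t n) + J (Suc n)" by (simp add: x)
    qed
    also have "\<dots> = phi J (\<Sum>t\<in>T'. q t * \<rho> t)"
      by (rule GG[OF rho T'(1,2)]) (use q in auto)
    finally have x2: "x = phi J (\<Sum>t\<in>T'. q t * \<rho> t)" .
    have inj': "inj_on \<rho> T'" using inj T'(2) inj_on_subset by blast
    define c' where "c' g = q (the_inv_into T' \<rho> g)" for g
    have "(\<Sum>t\<in>T'. q t * \<rho> t) = (\<Sum>g\<in>\<rho> ` T'. c' g * g)"
      unfolding c'_def by (subst sum.reindex[OF inj']) (simp add: the_inv_into_f_f[OF inj'])
    moreover have "\<forall>g\<in>\<rho> ` T'. c' g \<in> rees J"
      unfolding c'_def using q by (auto simp: the_inv_into_f_f[OF inj'])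
    ultimately have "(\<Sum>t\<in>T'. q t * \<rho> t) \<in> sub_gen (rees J) (\<rho> ` T)"
      unfolding sub_gen_def using T' by (intro CollectI exI[of _ "\<rho> ` T'"] exI[of _ c']) auto
    then show "x \<in> phi J ` sub_gen (rees J) (\<rho> ` T)" using x2 by blast
  next
    fix x assume "x \<in> phi J ` sub_gen (rees J) (\<rho> ` T)"
    then obtain p where x: "x = phi J p" and "p \<in> sub_gen (rees J) (\<rho> ` T)" by blast
    then have "\<exists>G' c. finite G' \<and> G' \<subseteq> \<rho> ` T \<and> (\<forall>g\<in>G'. c g \<in> rees J) \<and> p = (\<Sum>g\<in>G'. c g * g)"
      unfolding sub_gen_def by simp
    then obtain G' c where G': "finite G'" "G' \<subseteq> \<rho> ` T" "\<forall>g\<in>G'. c g \<in> rees J"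
      and p: "p = (\<Sum>g\<in>G'. c g * g)" by (elim exE conjE)
    obtain T' where T': "T' \<subseteq> T" "G' = \<rho> ` T'" using G'(2) subset_image_iff[of G' \<rho> T] by blast
    have inj': "inj_on \<rho> T'" using inj T'(1) inj_on_subset by blast
    have fT': "finite T'" using G'(1) T'(2) finite_image_iff[OF inj'] by simp
    have "p = (\<Sum>t\<in>T'. c (\<rho> t) * \<rho> t)" unfolding p T'(2) by (simp add: sum.reindex[OF inj'])
    also have "phi J \<dots> = (\<lambda>n. (\<Sum>t\<in>T'. gr_mul J (phi J (c (\<rho> t))) t n) + J (Suc n))"
      by (rule GG[OF rho fT' T'(1), symmetric]) (use G' T' in auto)
    finally have "x = (\<lambda>n. (\<Sum>t\<in>T'. gr_mul J (phi J (c (\<rho> t))) t n) + J (Suc n))" using x by simp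
    moreover have "\<forall>t\<in>T'. phi J (c (\<rho> t)) \<in> gr J" using G' T' phi_gr by auto
    ultimately show "x \<in> gr_gen J T" unfolding gr_gen_def using fT' T'(1)
      by (intro CollectI exI[of _ T'] exI[of _ "\<lambda>t. phi J (c (\<rho> t))"]) auto
  qed
qed

end

definition Nf :: "(nat \<Rightarrow> 'a::comm_ring_1 set) \<Rightarrow> 'a set \<Rightarrow> nat \<Rightarrow> 'a set" where
  "Nf J I n = J n \<inter> I"

definition homog :: "'a::comm_ring_1 poly set \<Rightarrow> bool" where
  "homog G \<longleftrightarrow> (\<forall>g\<in>G. g = monom (lead_coeff g) (degree g))"

definition V :: "(nat \<Rightarrow> 'a::comm_ring_1 set) \<Rightarrow> 'a poly set \<Rightarrow> nat \<Rightarrow> 'a set" where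
  "V J G n = sub_gen UNIV {y. \<exists>a g. g \<in> G \<and> degree g \<le> n \<and> a \<in> J (n - degree g) \<and> y = a * lead_coeff g}"

definition Pset :: "(nat \<Rightarrow> 'a::comm_ring_1 set) \<Rightarrow> 'a set \<Rightarrow> 'a set \<Rightarrow> nat \<Rightarrow> 'a set" where
  "Pset J I m n = sub_gen UNIV ({y. \<exists>a b. a \<in> m \<and> b \<in> Nf J I n \<and> y = a * b} \<union>
      {y. \<exists>a b k. 1 \<le> k \<and> k \<le> n \<and> a \<in> J k \<and> b \<in> Nf J I (n - k) \<and> y = a * b})"

lemma set_plus_mem: "x \<in> X + Y \<longleftrightarrow> (\<exists>a\<in>X. \<exists>b\<in>Y. x = a + b)"
  by (auto simp: set_plus_def)

lemma ideal_set_plus: "is_ideal X \<Longrightarrow> is_ideal Y \<Longrightarrow> is_ideal (X + Y)"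
proof -
  assume X: "is_ideal X" and Y: "is_ideal Y"
  have "0 \<in> X + Y" using ideal_0[OF X] ideal_0[OF Y] set_plus_intro[of 0 X 0 Y] by simp
  moreover have "x + y \<in> X + Y" if xy: "x \<in> X + Y" "y \<in> X + Y" for x y
  proof -
    obtain a b where "a \<in> X" "b \<in> Y" "x = a + b" using xy(1) by (auto simp: set_plus_mem)
    moreover obtain a' b' where "a' \<in> X" "b' \<in> Y" "y = a' + b'" using xy(2) by (auto simp: set_plus_mem)
    ultimately have "x + y = (a + a') + (b + b')" "a + a' \<in> X" "b + b' \<in> Y"
      using ideal_add[OF X] ideal_add[OF Y] by (auto simp: algebra_simps)
    then show ?thesis by (auto simp: set_plus_mem)
  qed
  moreover have "r * x \<in> X + Y" if xx: "x \<in> X + Y" for r x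
  proof -
    obtain a b where "a \<in> X" "b \<in> Y" "x = a + b" using xx by (auto simp: set_plus_mem)
    then have "r * x = r * a + r * b" "r * a \<in> X" "r * b \<in> Y"
      using ideal_mult[OF X] ideal_mult[OF Y] by (auto simp: algebra_simps)
    then show ?thesis by (auto simp: set_plus_mem)
  qed
  ultimately show ?thesis by (simp add: is_ideal_def)
qed

lemma Umon_rideal:
  assumes F: "filtration J" and A: "rideal (rees J) A"
  shows "rideal UNIV {x. monom x n \<in> A}"
proof -
  have "monom (r * x) n \<in> A" if "monom x n \<in> A" for r x
  proof -
    have "monom (r * x) n = monom r 0 * monom x n" by (simp add: mult_monom)
    moreover have "monom r 0 \<in> rees J" using rees_monom[OF F] J_0[OF F] by simp
    ultimately show ?thesis using A that by (simp add: rideal_def)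
  qed
  moreover have "monom (x + y) n \<in> A" if "monom x n \<in> A" "monom y n \<in> A" for x y
    using A that by (simp add: rideal_def add_monom[symmetric])
  ultimately show ?thesis using A by (simp add: rideal_def)
qed

lemma homogD: "homog G \<Longrightarrow> g \<in> G \<Longrightarrow> g = monom (lead_coeff g) (degree g)"
  by (simp add: homog_def)

lemma V_rideal: "rideal UNIV (V J G n)"
  unfolding V_def by (rule sub_gen_UNIV_rideal)

lemma V_ideal: "is_ideal (V J G n)"
  unfolding V_def by (rule sub_gen_UNIV_ideal)

lemma Pset_ideal: "is_ideal (Pset J I m n)"
  unfolding Pset_def by (rule sub_gen_UNIV_ideal)

lemma lemma_E:
  assumes F: "filtration J" and G: "homog G" and p: "p \<in> sub_gen (rees J) G"
  shows "coeff p n \<in> V J G n"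
proof -
  obtain G' c where G': "finite G'" "G' \<subseteq> G" "\<forall>g\<in>G'. c g \<in> rees J" and pc: "p = (\<Sum>g\<in>G'. c g * g)"
    using p unfolding sub_gen_def by (elim CollectE exE conjE)
  have "coeff (c g * g) n \<in> V J G n" if g: "g \<in> G'" for g
  proof -
    have eq: "g = monom (lead_coeff g) (degree g)" using homogD[OF G, of g] g G' by blast
    have "c g * g = g * c g" by (rule mult.commute)
    also have "\<dots> = monom (lead_coeff g) (degree g) * c g" using eq by (rule arg_cong[where f="\<lambda>h. h * c g"])
    finally have "c g * g = monom (lead_coeff g) (degree g) * c g" .
    then have e: "coeff (c g * g) n = (if n < degree g then 0 else lead_coeff g * coeff (c g) (n - degree g))"
      by (simp add: coeff_monom_mult)
    show ?thesis
    proof (cases "n < degree g")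
      case True then show ?thesis using e sub_gen_zero by (simp add: V_def)
    next
      case False
      have "coeff (c g) (n - degree g) \<in> J (n - degree g)" using G' g by (auto simp: rees_def)
      then have "lead_coeff g * coeff (c g) (n - degree g) \<in> V J G n"
        unfolding V_def using False g G'
        by (intro sub_gen_UNIV_gen CollectI exI[of _ "coeff (c g) (n - degree g)"] exI[of _ g])
          (auto simp: mult.commute)
      then show ?thesis using e False by simp
    qed
  qed
  then show ?thesis unfolding pc coeff_sum
    by (rule rideal_sum[OF V_rideal G'(1)])
qed

lemma lemma_M:
  assumes F: "filtration J" and A: "rideal (rees J) A" and G: "homog G" "G \<subseteq> A"
    and x: "x \<in> V J G n"
  shows "monom x n \<in> A"
proof -
  have "V J G n \<subseteq> {x. monom x n \<in> A}"
    unfolding V_def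
  proof (rule sub_gen_least[OF Umon_rideal[OF F A]], rule subsetI)
    fix y assume "y \<in> {y. \<exists>a g. g \<in> G \<and> degree g \<le> n \<and> a \<in> J (n - degree g) \<and> y = a * lead_coeff g}"
    then obtain a g where ag: "g \<in> G" "degree g \<le> n" "a \<in> J (n - degree g)" "y = a * lead_coeff g" by blast
    have "monom y n = monom a (n - degree g) * monom (lead_coeff g) (degree g)"
      using ag by (simp add: mult_monom)
    also have "\<dots> = monom a (n - degree g) * g" using homogD[OF G(1) ag(1)] by simp
    finally have "monom y n = monom a (n - degree g) * g" .
    moreover have "monom a (n - degree g) \<in> rees J" using rees_monom[OF F] ag by simp
    ultimately show "y \<in> {x. monom x n \<in> A}" using A G(2) ag(1) by (auto simp: rideal_def)
  qed
  then show ?thesis using x by blast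
qed

lemma rideal_UNIV_iff: "rideal UNIV W \<longleftrightarrow> is_ideal W"
  using ideal_rideal rideal_ideal by blast

lemma ideal_UNIV: "is_ideal UNIV" by (simp add: is_ideal_def)

lemma ideal_lin:
  assumes U: "is_ideal U" and M: "is_ideal M"
  shows "is_ideal {y. \<exists>a u. a \<in> M \<and> u \<in> U \<and> y = a * c + u}" (is "is_ideal ?W")
proof -
  have "0 \<in> ?W" using ideal_0[OF U] ideal_0[OF M] by force
  moreover have "x + y \<in> ?W" if "x \<in> ?W" "y \<in> ?W" for x y
  proof -
    obtain r u where 1: "r \<in> M" "u \<in> U" "x = r * c + u" using \<open>x \<in> ?W\<close> by blast
    obtain r' u' where 2: "r' \<in> M" "u' \<in> U" "y = r' * c + u'" using \<open>y \<in> ?W\<close> by blast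
    have "x + y = (r + r') * c + (u + u')" using 1 2 by (simp add: algebra_simps)
    moreover have "r + r' \<in> M" "u + u' \<in> U" using 1 2 ideal_add[OF M] ideal_add[OF U] by auto
    ultimately show ?thesis by blast
  qed
  moreover have "s * x \<in> ?W" if "x \<in> ?W" for s x
  proof -
    obtain r u where 1: "r \<in> M" "u \<in> U" "x = r * c + u" using \<open>x \<in> ?W\<close> by blast
    have "s * x = (s * r) * c + s * u" using 1 by (simp add: algebra_simps)
    moreover have "s * r \<in> M" "s * u \<in> U" using 1 ideal_mult[OF M] ideal_mult[OF U] by auto
    ultimately show ?thesis by blast
  qed
  ultimately show ?thesis unfolding is_ideal_def by blast
qed

lemma KEY:
  fixes J :: "nat \<Rightarrow> 'a::comm_ring_1 set"
  assumes F: "filtration J" and I: "is_ideal I"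
    and A: "rideal (rees J) A"
    and Zi: "\<And>n. is_ideal (Z n)" and ZA: "\<And>n z. z \<in> Z n \<Longrightarrow> monom z n \<in> A"
    and G: "homog G" and g0: "g0 \<in> G" and GA: "G - {g0} \<subseteq> A"
    and cG: "\<And>g. g \<in> G \<Longrightarrow> lead_coeff g \<in> Nf J I (degree g) + Z (degree g)"
    and NV: "\<And>n. Nf J I n \<subseteq> V J G n + Z n"
    and m: "is_ideal m" "\<And>a. a \<in> m \<Longrightarrow> \<exists>b. (1 - a) * b = 1"
    and P: "Nf J I (degree g0) \<subseteq> Pset J I m (degree g0) + Z (degree g0)"
  shows "g0 \<in> A"
proof -
  define d0 where "d0 = degree g0"
  define c0 where "c0 = lead_coeff g0"
  have g0eq: "g0 = monom c0 d0" using homogD[OF G g0] unfolding c0_def d0_def .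
  obtain x0 z0 where xz0: "x0 \<in> Nf J I d0" "z0 \<in> Z d0" "c0 = x0 + z0"
    using cG[OF g0] unfolding c0_def d0_def set_plus_mem by blast
  have Aadd: "p + q \<in> A" if "p \<in> A" "q \<in> A" for p q using A that by (simp add: rideal_def)
  have Amul: "r * p \<in> A" if "r \<in> rees J" "p \<in> A" for r p using A that by (simp add: rideal_def)
  have main: "\<forall>x\<in>Nf J I n. monom x n \<in> A" for n
  proof (induction n rule: less_induct)
    case (less n)
    define U where "U = {x. monom x n \<in> A}"
    have U: "is_ideal U" using Umon_rideal[OF F A] unfolding U_def rideal_UNIV_iff .
    have ZU: "Z n \<subseteq> U" using ZA unfolding U_def by blast
    have c0A: "monom c0 d0 \<in> A" if "d0 < n"
    proof -
      have "monom x0 d0 \<in> A" using less that xz0 by blast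
      moreover have "monom z0 d0 \<in> A" using ZA xz0 by blast
      ultimately show ?thesis using Aadd xz0(3) by (simp add: add_monom[symmetric])
    qed
    have gen: "y \<in> U \<or> (d0 = n \<and> (\<exists>a. y = a * c0))"
      if yin: "y \<in> {y. \<exists>a g. g \<in> G \<and> degree g \<le> n \<and> a \<in> J (n - degree g) \<and> y = a * lead_coeff g}" for y
    proof -
      obtain a g where ag: "g \<in> G" "degree g \<le> n" "a \<in> J (n - degree g)" "y = a * lead_coeff g"
        using yin by blast
      have "monom y n = monom a (n - degree g) * monom (lead_coeff g) (degree g)"
        using ag by (simp add: mult_monom)
      also have "\<dots> = monom a (n - degree g) * g" using homogD[OF G ag(1)] by simp
      finally have my: "monom y n = monom a (n - degree g) * g" .
      have ar: "monom a (n - degree g) \<in> rees J" using rees_monom[OF F] ag by simp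
      show ?thesis
      proof (cases "g = g0")
        case False
        then have "g \<in> A" using GA ag(1) by blast
        then show ?thesis using my ar Amul unfolding U_def by simp
      next
        case True
        show ?thesis
        proof (cases "d0 < n")
          case True2: True
          have "g0 \<in> A" using c0A[OF True2] g0eq by simp
          then have "monom a (n - degree g) * g \<in> A" using Amul ar True by simp
          then show ?thesis using my unfolding U_def by simp
        next
          case False
          then have "d0 = n" using ag(2) True d0_def by simp
          then show ?thesis using ag(4) True c0_def by blast
        qed
      qed
    qed
    show ?case
    proof (cases "n = d0")
      case False
      have VU: "V J G n \<subseteq> U" unfolding V_def
        by (rule sub_gen_least) (use U gen False in \<open>auto simp: rideal_UNIV_iff\<close>)
      show ?thesis
      proof
        fix x assume "x \<in> Nf J I n"
        then have "x \<in> V J G n + Z n" using NV[of n] by blast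
        then obtain v z where "v \<in> V J G n" "z \<in> Z n" "x = v + z" unfolding set_plus_mem by blast
        then show "monom x n \<in> A" using VU ZU ideal_add[OF U] unfolding U_def by blast
      qed
    next
      case True
      define W where "W = {y. \<exists>r u. u \<in> U \<and> y = r * c0 + u}"
      have W: "is_ideal W" unfolding W_def using ideal_lin[OF U ideal_UNIV, of c0] by simp
      have UW: "U \<subseteq> W" unfolding W_def by (auto intro: exI[of _ 0])
      have VW: "V J G n \<subseteq> W" unfolding V_def
      proof (rule sub_gen_least)
        show "rideal UNIV W" using W by (simp add: rideal_UNIV_iff)
      next
        show "{y. \<exists>a g. g \<in> G \<and> degree g \<le> n \<and> a \<in> J (n - degree g) \<and> y = a * lead_coeff g} \<subseteq> W"
        proof
          fix y assume "y \<in> {y. \<exists>a g. g \<in> G \<and> degree g \<le> n \<and> a \<in> J (n - degree g) \<and> y = a * lead_coeff g}"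
          from gen[OF this] show "y \<in> W"
          proof
            assume "y \<in> U" then show ?thesis using UW by blast
          next
            assume "d0 = n \<and> (\<exists>a. y = a * c0)"
            then obtain a where "y = a * c0" by blast
            then show ?thesis unfolding W_def using ideal_0[OF U] by (intro CollectI exI[of _ a] exI[of _ 0]) auto
          qed
        qed
      qed
      have NW: "Nf J I n \<subseteq> W"
      proof
        fix x assume "x \<in> Nf J I n"
        then have "x \<in> V J G n + Z n" using NV[of n] by blast
        then obtain v z where "v \<in> V J G n" "z \<in> Z n" "x = v + z" unfolding set_plus_mem by blast
        then show "x \<in> W" using VW ZU UW ideal_add[OF W] by blast
      qed
      define Wm where "Wm = {y. \<exists>a u. a \<in> m \<and> u \<in> U \<and> y = a * c0 + u}"
      have Wm: "is_ideal Wm" unfolding Wm_def by (rule ideal_lin[OF U m(1)])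
      have UWm: "U \<subseteq> Wm" unfolding Wm_def using ideal_0[OF m(1)] by (auto intro: exI[of _ 0])
      have PWm: "Pset J I m n \<subseteq> Wm" unfolding Pset_def
      proof (rule sub_gen_least)
        show "rideal UNIV Wm" using Wm by (simp add: rideal_UNIV_iff)
      next
        show "{y. \<exists>a b. a \<in> m \<and> b \<in> Nf J I n \<and> y = a * b} \<union>
          {y. \<exists>a b k. 1 \<le> k \<and> k \<le> n \<and> a \<in> J k \<and> b \<in> Nf J I (n - k) \<and> y = a * b} \<subseteq> Wm"
        proof (rule subsetI, elim UnE)
          fix y assume "y \<in> {y. \<exists>a b. a \<in> m \<and> b \<in> Nf J I n \<and> y = a * b}"
          then obtain a b where ab: "a \<in> m" "b \<in> Nf J I n" "y = a * b" by blast
          then obtain r u where "u \<in> U" "b = r * c0 + u" using NW unfolding W_def by blast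
          then have "y = (a * r) * c0 + a * u" "a * r \<in> m" "a * u \<in> U"
            using ab ideal_mult[OF U \<open>u \<in> U\<close>, of a] ideal_mult2[OF m(1) ab(1), of r]
            by (simp_all add: algebra_simps)
          then show "y \<in> Wm" unfolding Wm_def by blast
        next
          fix y assume "y \<in> {y. \<exists>a b k. 1 \<le> k \<and> k \<le> n \<and> a \<in> J k \<and> b \<in> Nf J I (n - k) \<and> y = a * b}"
          then obtain a b k where ab: "1 \<le> k" "k \<le> n" "a \<in> J k" "b \<in> Nf J I (n - k)" "y = a * b" by blast
          then have "monom b (n - k) \<in> A" using less by auto
          moreover have "monom a k \<in> rees J" using rees_monom[OF F] ab by simp
          ultimately have "monom a k * monom b (n - k) \<in> A" using Amul by blast
          then have "y \<in> U" unfolding U_def using ab by (simp add: mult_monom)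
          then show "y \<in> Wm" using UWm by blast
        qed
      qed
      have "c0 \<in> Wm"
      proof -
        have x0n: "x0 \<in> Nf J I n" using xz0 True by simp
        have "x0 \<in> Pset J I m n + Z n" using P x0n True unfolding d0_def by blast
        then obtain p z1 where "p \<in> Pset J I m n" "z1 \<in> Z n" "x0 = p + z1"
          unfolding set_plus_mem by blast
        then have "p \<in> Wm" "z1 \<in> Wm" "z0 \<in> Wm" using PWm ZU UWm xz0 True by auto
        moreover have "c0 = p + (z1 + z0)" using xz0(3) \<open>x0 = p + z1\<close> by (simp add: algebra_simps)
        ultimately show ?thesis using ideal_add[OF Wm] by simp
      qed
      then obtain a u where au: "a \<in> m" "u \<in> U" "c0 = a * c0 + u" unfolding Wm_def by blast
      obtain b where b: "(1 - a) * b = 1" using m(2)[OF au(1)] by blast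
      have "c0 = b * u"
      proof -
        have "(1 - a) * c0 = u" using au(3) by (simp add: algebra_simps)
        then have "b * u = b * ((1 - a) * c0)" by simp
        also have "\<dots> = ((1 - a) * b) * c0" by (simp add: algebra_simps)
        finally show ?thesis using b by simp
      qed
      then have c0U: "c0 \<in> U" using ideal_mult[OF U au(2)] by simp
      have "W \<subseteq> U"
      proof
        fix y assume "y \<in> W"
        then obtain r u where "u \<in> U" "y = r * c0 + u" unfolding W_def by blast
        then show "y \<in> U" using ideal_add[OF U] ideal_mult[OF U c0U] by simp
      qed
      then show ?thesis using NW unfolding U_def by blast
    qed
  qed
  have "monom x0 d0 \<in> A" using main xz0 by blast
  moreover have "monom z0 d0 \<in> A" using ZA xz0 by blast
  ultimately show ?thesis using Aadd g0eq xz0(3) by (simp add: add_monom[symmetric])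
qed

lemma R2g:
  fixes J :: "nat \<Rightarrow> 'a::comm_ring_1 set"
  assumes F: "filtration J" and I: "is_ideal I"
    and Zi: "\<And>n. is_ideal (Z n)" and ZJ: "\<And>k n a z. a \<in> J k \<Longrightarrow> z \<in> Z n \<Longrightarrow> a * z \<in> Z (n + k)"
    and G: "homog G"
    and cG: "\<And>g. g \<in> G \<Longrightarrow> lead_coeff g \<in> Nf J I (degree g) + Z (degree g)"
    and NV: "Nf J I n \<subseteq> V J G n + Z n"
    and nd: "\<forall>g\<in>G. degree g \<noteq> n"
  shows "Nf J I n \<subseteq> Pset J I m n + Z n"
proof -
  define T where "T = Pset J I m n + Z n"
  have T: "is_ideal T" unfolding T_def by (intro ideal_set_plus Pset_ideal Zi)
  have ZT: "Z n \<subseteq> T"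
  proof
    fix z assume "z \<in> Z n"
    then have "0 + z \<in> T" unfolding T_def by (intro set_plus_intro ideal_0 Pset_ideal)
    then show "z \<in> T" by simp
  qed
  have VT: "V J G n \<subseteq> T" unfolding V_def
  proof (rule sub_gen_least)
    show "rideal UNIV T" using T by (simp add: rideal_UNIV_iff)
  next
    show "{y. \<exists>a g. g \<in> G \<and> degree g \<le> n \<and> a \<in> J (n - degree g) \<and> y = a * lead_coeff g} \<subseteq> T"
    proof
      fix y assume "y \<in> {y. \<exists>a g. g \<in> G \<and> degree g \<le> n \<and> a \<in> J (n - degree g) \<and> y = a * lead_coeff g}"
      then obtain a g where ag: "g \<in> G" "degree g \<le> n" "a \<in> J (n - degree g)" "y = a * lead_coeff g" by blast
      have lt: "degree g < n" using ag(2) nd ag(1) by fastforce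
      obtain x z where xz: "x \<in> Nf J I (degree g)" "z \<in> Z (degree g)" "lead_coeff g = x + z"
        using cG[OF ag(1)] unfolding set_plus_mem by blast
      have "a * x \<in> Pset J I m n" unfolding Pset_def
        by (rule sub_gen_UNIV_gen, rule UnI2, rule CollectI,
            rule exI[of _ a], rule exI[of _ x], rule exI[of _ "n - degree g"]) (use lt ag xz in auto)
      then have "a * x + 0 \<in> T" unfolding T_def by (intro set_plus_intro ideal_0 Zi)
      then have "a * x \<in> T" by simp
      moreover have "a * z \<in> Z n" using ZJ[OF ag(3) xz(2)] ag(2) by simp
      ultimately show "y \<in> T" using ag(4) xz(3) ZT ideal_add[OF T] by (auto simp: algebra_simps)
    qed
  qed
  show ?thesis
  proof
    fix x assume "x \<in> Nf J I n"
    then have "x \<in> V J G n + Z n" using NV by blast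
    then obtain v z where "v \<in> V J G n" "z \<in> Z n" "x = v + z" unfolding set_plus_mem by blast
    then show "x \<in> Pset J I m n + Z n" using VT ZT ideal_add[OF T] unfolding T_def by blast
  qed
qed

section \<open>Local rings\<close>

lemma nonunit_in_maximal:
  fixes x :: "'a::comm_ring_1"
  assumes nu: "\<not> (\<exists>b. x * b = 1)"
  shows "\<exists>M. maximal_ideal M \<and> x \<in> M"
proof -
  define \<A> where "\<A> = {K::'a set. is_ideal K \<and> x \<in> K \<and> 1 \<notin> K}"
  define P where "P = {y. \<exists>r. y = r * x}"
  have P: "P \<in> \<A>"
  proof -
    have "is_ideal P" unfolding is_ideal_def P_def
    proof (intro conjI ballI allI impI)
      show "0 \<in> {y. \<exists>r. y = r * x}" by (auto intro: exI[of _ 0])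
    next
      fix a b assume "a \<in> {y. \<exists>r. y = r * x}" "b \<in> {y. \<exists>r. y = r * x}"
      then obtain r s where "a = r * x" "b = s * x" by blast
      then have "a + b = (r + s) * x" by (simp add: algebra_simps)
      then show "a + b \<in> {y. \<exists>r. y = r * x}" by blast
    next
      fix r a assume "a \<in> {y. \<exists>r. y = r * x}"
      then obtain s where "a = s * x" by blast
      then have "r * a = (r * s) * x" by (simp add: algebra_simps)
      then show "r * a \<in> {y. \<exists>r. y = r * x}" by blast
    qed
    moreover have "x \<in> P" unfolding P_def by (auto intro: exI[of _ 1])
    moreover have "1 \<notin> P"
    proof
      assume "1 \<in> P"
      then obtain r where "1 = r * x" unfolding P_def by blast
      then have "x * r = 1" by (simp add: mult.commute)
      then show False using nu by blast
    qed
    ultimately show ?thesis unfolding \<A>_def by blast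
  qed
  have "\<exists>M\<in>\<A>. \<forall>X\<in>\<A>. M \<subseteq> X \<longrightarrow> X = M"
  proof (rule subset_Zorn_nonempty)
    show "\<A> \<noteq> {}" using P by blast
  next
    fix \<C> assume C: "\<C> \<noteq> {}" "subset.chain \<A> \<C>"
    then have CA: "\<C> \<subseteq> \<A>" and tot: "\<And>X Y. X \<in> \<C> \<Longrightarrow> Y \<in> \<C> \<Longrightarrow> X \<subseteq> Y \<or> Y \<subseteq> X"
      unfolding subset_chain_def by auto
    obtain K0 where K0: "K0 \<in> \<C>" using C(1) by blast
    have idC: "\<And>K. K \<in> \<C> \<Longrightarrow> is_ideal K" and xC: "\<And>K. K \<in> \<C> \<Longrightarrow> x \<in> K"
      and oneC: "\<And>K. K \<in> \<C> \<Longrightarrow> 1 \<notin> K" using CA unfolding \<A>_def by auto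
    have "is_ideal (\<Union>\<C>)" unfolding is_ideal_def
    proof (intro conjI ballI allI impI)
      show "0 \<in> \<Union>\<C>" using K0 ideal_0[OF idC[OF K0]] by blast
    next
      fix a b assume "a \<in> \<Union>\<C>" "b \<in> \<Union>\<C>"
      then obtain X Y where XY: "X \<in> \<C>" "Y \<in> \<C>" "a \<in> X" "b \<in> Y" by blast
      show "a + b \<in> \<Union>\<C>"
      proof (cases "X \<subseteq> Y")
        case True then show ?thesis using XY ideal_add[OF idC[OF XY(2)]] by blast
      next
        case False then have "Y \<subseteq> X" using tot XY by blast
        then show ?thesis using XY ideal_add[OF idC[OF XY(1)]] by blast
      qed
    next
      fix r a assume "a \<in> \<Union>\<C>"
      then obtain X where "X \<in> \<C>" "a \<in> X" by blast
      then show "r * a \<in> \<Union>\<C>" using ideal_mult[OF idC] by blast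
    qed
    moreover have "x \<in> \<Union>\<C>" using K0 xC by blast
    moreover have "1 \<notin> \<Union>\<C>" using oneC by blast
    ultimately show "\<Union>\<C> \<in> \<A>" unfolding \<A>_def by blast
  qed
  then obtain M where M: "M \<in> \<A>" "\<And>X. X \<in> \<A> \<Longrightarrow> M \<subseteq> X \<Longrightarrow> X = M" by blast
  have "maximal_ideal M" unfolding maximal_ideal_def
  proof (intro conjI allI impI)
    show "is_ideal M" using M(1) unfolding \<A>_def by blast
    show "M \<noteq> UNIV" using M(1) unfolding \<A>_def by blast
  next
    fix K assume K: "is_ideal K" "M \<subseteq> K"
    show "K = M \<or> K = UNIV"
    proof (cases "1 \<in> K")
      case True then show ?thesis using ideal_one[OF K(1)] by blast
    next
      case False
      then have "K \<in> \<A>" using K M(1) unfolding \<A>_def by blast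
      then show ?thesis using M(2) K(2) by blast
    qed
  qed
  then show ?thesis using M(1) unfolding \<A>_def by blast
qed

lemma local_max:
  assumes "local_ring TYPE('a)"
  obtains m :: "'a::comm_ring_1 set" where "is_ideal m" "1 \<notin> m"
    "\<And>a. a \<in> m \<Longrightarrow> \<exists>b. (1 - a) * b = 1"
    "\<And>x. \<not> (\<exists>b. x * b = 1) \<Longrightarrow> x \<in> m"
proof -
  obtain m :: "'a set" where m: "maximal_ideal m" and uniq: "\<And>M. maximal_ideal M \<Longrightarrow> M = m"
    using assms unfolding local_ring_def by blast
  have im: "is_ideal m" using m by (simp add: maximal_ideal_def)
  have one: "1 \<notin> m" using m ideal_one[OF im] by (auto simp: maximal_ideal_def)
  have nu: "x \<in> m" if "\<not> (\<exists>b. x * b = 1)" for x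
    using nonunit_in_maximal[OF that] uniq by blast
  have "\<exists>b. (1 - a) * b = 1" if a: "a \<in> m" for a
  proof (rule ccontr)
    assume "\<not> (\<exists>b. (1 - a) * b = 1)"
    then have "1 - a \<in> m" by (rule nu)
    then have "(1 - a) + a \<in> m" using ideal_add[OF im _ a] by blast
    then show False using one by simp
  qed
  then show ?thesis using that im one nu by blast
qed

lemma set_plus_zero_right: "X + {0::'b::comm_monoid_add} = X"
  by (auto simp: set_plus_def)

lemma ideal_zero_set: "is_ideal {0::'b::comm_ring_1}"
  by (simp add: is_ideal_def)

lemma Nf_ideal: "filtration J \<Longrightarrow> is_ideal I \<Longrightarrow> is_ideal (Nf J I n)"
  unfolding Nf_def is_ideal_def using J_ideal[of J n] by (auto simp: is_ideal_def)

lemma Pset_gen1: "a \<in> m \<Longrightarrow> b \<in> Nf J I n \<Longrightarrow> a * b \<in> Pset J I m n"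
  unfolding Pset_def by (rule sub_gen_UNIV_gen) blast

lemma Pset_gen2: "1 \<le> k \<Longrightarrow> k \<le> n \<Longrightarrow> a \<in> J k \<Longrightarrow> b \<in> Nf J I (n - k) \<Longrightarrow> a * b \<in> Pset J I m n"
  unfolding Pset_def by (rule sub_gen_UNIV_gen, rule UnI2) blast

lemma Pset_sub_Nf:
  assumes F: "filtration J" and I: "is_ideal I"
  shows "Pset J I m n \<subseteq> Nf J I n"
  unfolding Pset_def
proof (rule sub_gen_least)
  show "rideal UNIV (Nf J I n)" using Nf_ideal[OF F I] by (simp add: rideal_UNIV_iff)
next
  show "{y. \<exists>a b. a \<in> m \<and> b \<in> Nf J I n \<and> y = a * b} \<union>
      {y. \<exists>a b k. 1 \<le> k \<and> k \<le> n \<and> a \<in> J k \<and> b \<in> Nf J I (n - k) \<and> y = a * b} \<subseteq> Nf J I n"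
  proof (rule subsetI, elim UnE)
    fix y assume "y \<in> {y. \<exists>a b. a \<in> m \<and> b \<in> Nf J I n \<and> y = a * b}"
    then show "y \<in> Nf J I n" using ideal_mult[OF Nf_ideal[OF F I]] by blast
  next
    fix y assume "y \<in> {y. \<exists>a b k. 1 \<le> k \<and> k \<le> n \<and> a \<in> J k \<and> b \<in> Nf J I (n - k) \<and> y = a * b}"
    then obtain a b k where ab: "k \<le> n" "a \<in> J k" "b \<in> Nf J I (n - k)" "y = a * b" by blast
    have "a * b \<in> J (k + (n - k))" using J_mult[OF F ab(2)] ab(3) by (simp add: Nf_def)
    moreover have "a * b \<in> I" using ab(3) ideal_mult[OF I] by (simp add: Nf_def)
    ultimately show "y \<in> Nf J I n" using ab by (simp add: Nf_def)
  qed
qed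

lemma J_all_UNIV:
  assumes F: "filtration J" and J1: "J 1 = UNIV"
  shows "J n = UNIV"
proof -
  have "1 \<in> J n"
  proof (induction n)
    case 0 then show ?case using J_0[OF F] by simp
  next
    case (Suc n)
    have "1 * 1 \<in> J (1 + n)" using J_mult[OF F _ Suc] J1 by blast
    then show ?case by simp
  qed
  then show ?thesis using ideal_one[OF J_ideal[OF F]] by blast
qed

lemma COMB:
  fixes J :: "nat \<Rightarrow> 'a::comm_ring_1 set"
  assumes F: "filtration J" and I: "is_ideal I" and m: "is_ideal m" and Jm: "J 1 \<noteq> UNIV \<Longrightarrow> J 1 \<subseteq> m"
    and G1: "finite G1" "homog G1" "\<And>g. g \<in> G1 \<Longrightarrow> lead_coeff g \<in> Nf J I (degree g)"
    and NV: "\<And>n. Nf J I n \<subseteq> V J G1 n"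
  defines "S0 \<equiv> {n. \<not> Nf J I n \<subseteq> Pset J I m n}" and "S1 \<equiv> {n. \<not> Nf J I n \<subseteq> Pset J I m n + J (Suc n)}"
  shows "finite S0" and "(if S0 = {} then 0 else Max S0) = (if S1 = {} then 0 else Max S1)"
proof -
  have S0deg: "S0 \<subseteq> degree ` G1"
  proof
    fix n assume n: "n \<in> S0"
    show "n \<in> degree ` G1"
    proof (rule ccontr)
      assume "n \<notin> degree ` G1"
      then have nd: "\<forall>g\<in>G1. degree g \<noteq> n" by force
      have "Nf J I n \<subseteq> Pset J I m n + {0}"
        by (rule R2g[OF F I, where Z="\<lambda>n. {0}"])
          (use G1 NV nd in \<open>auto simp: set_plus_zero_right ideal_zero_set\<close>)
      then show False using n unfolding S0_def set_plus_zero_right by blast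
    qed
  qed
  then show finS0: "finite S0" using G1(1) finite_subset by blast
  have PN: "\<And>n. Pset J I m n \<subseteq> Nf J I n" using Pset_sub_Nf[OF F I] by blast
  have S10: "S1 \<subseteq> S0"
  proof
    fix n assume "n \<in> S1"
    then obtain x where x: "x \<in> Nf J I n" "x \<notin> Pset J I m n + J (Suc n)" unfolding S1_def by blast
    have "x \<notin> Pset J I m n"
    proof
      assume "x \<in> Pset J I m n"
      then have "x + 0 \<in> Pset J I m n + J (Suc n)" by (intro set_plus_intro ideal_0 J_ideal[OF F])
      then show False using x by simp
    qed
    then show "n \<in> S0" using x unfolding S0_def by blast
  qed
  show "(if S0 = {} then 0 else Max S0) = (if S1 = {} then 0 else Max S1)"
  proof (cases "J 1 = UNIV")
    case True
    have JU: "\<And>n. J n = UNIV" using J_all_UNIV[OF F True] .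
    have "S1 = {}" unfolding S1_def
    proof (intro equalityI subsetI)
      fix n assume "n \<in> {n. \<not> Nf J I n \<subseteq> Pset J I m n + J (Suc n)}"
      then obtain x where x: "x \<in> Nf J I n" "x \<notin> Pset J I m n + J (Suc n)" by blast
      have "0 + x \<in> Pset J I m n + J (Suc n)" using JU by (intro set_plus_intro ideal_0 Pset_ideal) auto
      then show "n \<in> {}" using x by simp
    qed simp
    moreover have "S0 \<subseteq> {0}"
    proof
      fix n assume n: "n \<in> S0"
      show "n \<in> {0}"
      proof (rule ccontr)
        assume "n \<notin> {0}"
        then have n1: "1 \<le> n" by simp
        have "Nf J I n \<subseteq> Pset J I m n"
        proof
          fix x assume "x \<in> Nf J I n"
          then have "x \<in> Nf J I (n - n)" using JU by (simp add: Nf_def)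
          moreover have "1 \<in> J n" using JU by simp
          ultimately have "1 * x \<in> Pset J I m n" using n1 by (intro Pset_gen2) auto
          then show "x \<in> Pset J I m n" by simp
        qed
        then show False using n unfolding S0_def by blast
      qed
    qed
    moreover have "S0 = {} \<or> S0 = {0}" using \<open>S0 \<subseteq> {0}\<close> by (rule subset_singletonD)
    ultimately show ?thesis by (elim disjE) simp_all
  next
    case False
    then have J1m: "J 1 \<subseteq> m" using Jm by blast
    have stepA: "Nf J I k \<subseteq> Pset J I m k + Nf J I (Suc k)" if "k \<notin> S1" for k
    proof
      fix x assume x: "x \<in> Nf J I k"
      then have "x \<in> Pset J I m k + J (Suc k)" using that unfolding S1_def by blast
      then obtain p j where pj: "p \<in> Pset J I m k" "j \<in> J (Suc k)" "x = p + j" unfolding set_plus_mem by blast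
      have "j = x - p" using pj by simp
      moreover have "x - p \<in> I"
      proof -
        have "x \<in> I" "p \<in> I" using x PN pj(1) by (auto simp: Nf_def)
        then show ?thesis by (rule ideal_diff[OF I])
      qed
      ultimately have "j \<in> Nf J I (Suc k)" using pj by (simp add: Nf_def)
      then show "x \<in> Pset J I m k + Nf J I (Suc k)" using pj set_plus_intro by blast
    qed
    have stepB: "Pset J I m (Suc k) \<subseteq> Pset J I m k" for k
      unfolding Pset_def[of J I m "Suc k"]
    proof (rule sub_gen_least)
      show "rideal UNIV (Pset J I m k)" using Pset_ideal by (simp add: rideal_UNIV_iff)
    next
      show "{y. \<exists>a b. a \<in> m \<and> b \<in> Nf J I (Suc k) \<and> y = a * b} \<union>
        {y. \<exists>a b i. 1 \<le> i \<and> i \<le> Suc k \<and> a \<in> J i \<and> b \<in> Nf J I (Suc k - i) \<and> y = a * b} \<subseteq> Pset J I m k"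
      proof (rule subsetI, elim UnE)
        fix y assume "y \<in> {y. \<exists>a b. a \<in> m \<and> b \<in> Nf J I (Suc k) \<and> y = a * b}"
        then obtain a b where ab: "a \<in> m" "b \<in> Nf J I (Suc k)" "y = a * b" by blast
        have "b \<in> Nf J I k" using ab(2) J_mono[OF F, of k "Suc k"] by (auto simp: Nf_def)
        then show "y \<in> Pset J I m k" using ab Pset_gen1 by blast
      next
        fix y assume "y \<in> {y. \<exists>a b i. 1 \<le> i \<and> i \<le> Suc k \<and> a \<in> J i \<and> b \<in> Nf J I (Suc k - i) \<and> y = a * b}"
        then obtain a b i where ab: "1 \<le> i" "i \<le> Suc k" "a \<in> J i" "b \<in> Nf J I (Suc k - i)" "y = a * b" by blast
        show "y \<in> Pset J I m k"
        proof (cases "i = 1")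
          case True
          then show ?thesis using ab J1m Pset_gen1[of a m b J I k] by auto
        next
          case False
          then have "a \<in> J (i - 1)" using ab J_mono[OF F, of "i - 1" i] by auto
          moreover have "b \<in> Nf J I (k - (i - 1))" using ab False by (simp add: Suc_diff_le)
          ultimately show ?thesis using ab False Pset_gen2[of "i - 1" k a J b I m] by auto
        qed
      qed
    qed
    have stepB': "Pset J I m (n + j) \<subseteq> Pset J I m n" for n j
      by (induction j) (use stepB in auto)
    have key: "n \<notin> S0" if nS: "\<forall>k\<ge>n. k \<notin> S1" for n
    proof -
      have stepC: "Nf J I n \<subseteq> Pset J I m n + Nf J I (n + j)" for j
      proof (induction j)
        case 0
        show ?case
        proof
          fix x assume "x \<in> Nf J I n"
          then have "0 + x \<in> Pset J I m n + Nf J I (n + 0)" by (intro set_plus_intro ideal_0 Pset_ideal) simp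
          then show "x \<in> Pset J I m n + Nf J I (n + 0)" by simp
        qed
      next
        case (Suc j)
        show ?case
        proof
          fix x assume "x \<in> Nf J I n"
          then have "x \<in> Pset J I m n + Nf J I (n + j)" using Suc by blast
          then obtain p y where py: "p \<in> Pset J I m n" "y \<in> Nf J I (n + j)" "x = p + y"
            unfolding set_plus_mem by blast
          have "n + j \<notin> S1" using nS by simp
          then have "y \<in> Pset J I m (n + j) + Nf J I (Suc (n + j))" using stepA[of "n + j"] py(2) by blast
          then obtain p' y' where py': "p' \<in> Pset J I m (n + j)" "y' \<in> Nf J I (Suc (n + j))" "y = p' + y'"
            unfolding set_plus_mem by blast
          have "p + p' \<in> Pset J I m n" using py(1) py'(1) stepB' ideal_add[OF Pset_ideal] by blast
          moreover have "x = (p + p') + y'" using py py' by (simp add: algebra_simps)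
          ultimately show "x \<in> Pset J I m n + Nf J I (n + Suc j)" using py' set_plus_intro by fastforce
        qed
      qed
      define D where "D = Max (insert 0 (degree ` G1))"
      have Dg: "degree g \<le> D" if "g \<in> G1" for g
        unfolding D_def using G1(1) that by (intro Max_ge) auto
      have stepD: "V J G1 (n + D + 1) \<subseteq> Pset J I m n" unfolding V_def
      proof (rule sub_gen_least)
        show "rideal UNIV (Pset J I m n)" using Pset_ideal by (simp add: rideal_UNIV_iff)
      next
        show "{y. \<exists>a g. g \<in> G1 \<and> degree g \<le> n + D + 1 \<and> a \<in> J (n + D + 1 - degree g) \<and> y = a * lead_coeff g}
          \<subseteq> Pset J I m n"
        proof
          fix y assume "y \<in> {y. \<exists>a g. g \<in> G1 \<and> degree g \<le> n + D + 1 \<and> a \<in> J (n + D + 1 - degree g) \<and> y = a * lead_coeff g}"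
          then obtain a g where ag: "g \<in> G1" "a \<in> J (n + D + 1 - degree g)" "y = a * lead_coeff g" by blast
          have lc: "lead_coeff g \<in> Nf J I (degree g)" using G1(3) ag(1) .
          have dD: "degree g \<le> D" using Dg ag(1) .
          show "y \<in> Pset J I m n"
          proof (cases "degree g < n")
            case True
            have le: "n - degree g \<le> n + D + 1 - degree g" by arith
            have "a \<in> J (n - degree g)" using ag(2) J_mono[OF F le] by blast
            moreover have "lead_coeff g \<in> Nf J I (n - (n - degree g))" using lc True by simp
            ultimately show ?thesis using True ag(3) Pset_gen2[of "n - degree g" n a J "lead_coeff g" I m] by simp
          next
            case False
            have le: "1 \<le> n + D + 1 - degree g" using dD by arith
            have "a \<in> J 1" using ag(2) J_mono[OF F le] by blast
            then have "a \<in> m" using J1m by blast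
            moreover have "lead_coeff g \<in> Nf J I n" using lc False J_mono[OF F, of n "degree g"] by (auto simp: Nf_def)
            ultimately show ?thesis using ag(3) Pset_gen1 by blast
          qed
        qed
      qed
      have "Nf J I n \<subseteq> Pset J I m n"
      proof
        fix x assume "x \<in> Nf J I n"
        then have "x \<in> Pset J I m n + Nf J I (n + (D + 1))" using stepC[of "D + 1"] by blast
        then obtain p y where py: "p \<in> Pset J I m n" "y \<in> Nf J I (n + (D + 1))" "x = p + y"
          unfolding set_plus_mem by blast
        have "y \<in> Pset J I m n" using py(2) NV[of "n + D + 1"] stepD by (auto simp: add.assoc)
        then show "x \<in> Pset J I m n" using py ideal_add[OF Pset_ideal] by blast
      qed
      then show ?thesis unfolding S0_def by blast
    qed
    have finS1: "finite S1" using S10 finS0 finite_subset by blast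
    show ?thesis
    proof (cases "S1 = {}")
      case True
      then have "S0 = {}" using key by blast
      then show ?thesis using True by simp
    next
      case False
      then have S0ne: "S0 \<noteq> {}" using S10 by blast
      have "Max S0 \<le> Max S1"
      proof (rule Max.boundedI[OF finS0 S0ne])
        fix n assume n: "n \<in> S0"
        show "n \<le> Max S1"
        proof (rule ccontr)
          assume "\<not> n \<le> Max S1"
          then have "\<forall>k\<ge>n. k \<notin> S1" using Max_ge[OF finS1] by fastforce
          then show False using key n by blast
        qed
      qed
      moreover have "Max S1 \<le> Max S0" using Max_mono[OF S10 False finS0] .
      ultimately show ?thesis using False S0ne by simp
    qed
  qed
qed

lemma min_subset:
  assumes "finite A" "P A"
  shows "\<exists>B\<subseteq>A. P B \<and> (\<forall>C. C \<subset> B \<longrightarrow> \<not> P C)"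
  using assms
proof (induction A rule: finite_psubset_induct)
  case (psubset A)
  show ?case
  proof (cases "\<forall>C. C \<subset> A \<longrightarrow> \<not> P C")
    case True
    have "A \<subseteq> A" by simp
    then show ?thesis using True psubset.prems by (intro exI[of _ A]) simp
  next
    case False
    then obtain C where C: "C \<subset> A" "P C" by auto
    have "\<exists>B\<subseteq>C. P B \<and> (\<forall>D. D \<subset> B \<longrightarrow> \<not> P D)" by (rule psubset.IH[OF C])
    then obtain B where B: "B \<subseteq> C" "P B" "\<forall>D. D \<subset> B \<longrightarrow> \<not> P D" by (elim exE conjE)
    have "B \<subseteq> A" using B(1) C(1) by (rule subset_psubset_trans[THEN psubset_imp_subset])
    then show ?thesis using B(2,3) by (intro exI[of _ B]) simp
  qed
qed

lemma rideal_plus: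
  assumes X: "rideal S X" and Y: "rideal S Y"
  shows "rideal S (X + Y)"
proof -
  have "0 \<in> X + Y" using X Y set_plus_intro[of 0 X 0 Y] by (simp add: rideal_def)
  moreover have "x + y \<in> X + Y" if xy: "x \<in> X + Y" "y \<in> X + Y" for x y
  proof -
    obtain a b where ab: "a \<in> X" "b \<in> Y" "x = a + b" using xy(1) by (auto simp: set_plus_mem)
    obtain a' b' where ab': "a' \<in> X" "b' \<in> Y" "y = a' + b'" using xy(2) by (auto simp: set_plus_mem)
    have "x + y = (a + a') + (b + b')" using ab ab' by (simp add: algebra_simps)
    moreover have "a + a' \<in> X" "b + b' \<in> Y" using ab ab' X Y by (auto simp: rideal_def)
    ultimately show ?thesis by (auto simp: set_plus_mem)
  qed
  moreover have "r * x \<in> X + Y" if r: "r \<in> S" and xx: "x \<in> X + Y" for r x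
  proof -
    obtain a b where ab: "a \<in> X" "b \<in> Y" "x = a + b" using xx by (auto simp: set_plus_mem)
    have "r * x = r * a + r * b" using ab by (simp add: algebra_simps)
    moreover have "r * a \<in> X" "r * b \<in> Y" using ab X Y r by (auto simp: rideal_def)
    ultimately show ?thesis by (auto simp: set_plus_mem)
  qed
  ultimately show ?thesis unfolding rideal_def by blast
qed

lemma plus_right_sub: "0 \<in> Y \<Longrightarrow> X \<subseteq> X + (Y::'b::comm_monoid_add set)"
proof
  fix x assume "0 \<in> Y" "x \<in> X"
  then have "x + 0 \<in> X + Y" by (intro set_plus_intro)
  then show "x \<in> X + Y" by simp
qed

lemma plus_left_sub: "0 \<in> X \<Longrightarrow> Y \<subseteq> X + (Y::'b::comm_monoid_add set)"
proof
  fix y assume "0 \<in> X" "y \<in> Y"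
  then have "0 + y \<in> X + Y" by (intro set_plus_intro)
  then show "y \<in> X + Y" by simp
qed

context
  fixes J :: "nat \<Rightarrow> 'a::comm_ring_1 set"
  assumes F: "filtration J"
begin

lemma sum_monoms_in:
  assumes A: "rideal (rees J) A" and h: "\<And>k. monom (coeff p k) k \<in> A"
  shows "p \<in> A"
proof -
  have "(\<Sum>i\<le>degree p. monom (coeff p i) i) \<in> A"
    by (rule rideal_sum[OF A]) (use h in auto)
  then show ?thesis by (simp add: poly_as_sum_of_monoms)
qed

lemma Kr_0: "0 \<in> Kr J" by (simp add: Kr_def ideal_0[OF J_ideal[OF F]])

lemma Kr_neg: "k \<in> Kr J \<Longrightarrow> - k \<in> Kr J"
  by (simp add: Kr_def ideal_neg[OF J_ideal[OF F]])

lemma Kr_monom: "c \<in> J (Suc n) \<Longrightarrow> monom c n \<in> Kr J"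
  by (simp add: Kr_def coeff_monom ideal_0[OF J_ideal[OF F]])

lemma phi_plus_Kr: "phi J ` (X + Kr J) = phi J ` X"
proof (intro set_eqI iffI)
  fix y assume "y \<in> phi J ` (X + Kr J)"
  then obtain p k where "p \<in> X" "k \<in> Kr J" "y = phi J (p + k)" by (auto simp: set_plus_mem)
  then show "y \<in> phi J ` X" using Kr_phi[OF F] by auto
next
  fix y assume "y \<in> phi J ` X"
  then show "y \<in> phi J ` (X + Kr J)" using plus_right_sub[OF Kr_0, of X] by blast
qed

lemma phi_eq_plus: "phi J p = phi J q \<Longrightarrow> p \<in> {q} + Kr J"
proof -
  assume "phi J p = phi J q"
  then have "p - q \<in> Kr J" using phi_eq[OF F] by blast
  then have "q + (p - q) \<in> {q} + Kr J" by (intro set_plus_intro) auto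
  then show ?thesis by simp
qed

lemma rees_part_sub: "rees_part J I \<subseteq> rees J" by (auto simp: rees_part_def)

lemma rees_part_monom: "is_ideal I \<Longrightarrow> monom x n \<in> rees_part J I \<longleftrightarrow> x \<in> Nf J I n"
  by (auto simp: rees_part_def rees_monom[OF F] Nf_def coeff_monom ideal_0 split: if_splits)

lemma rees_part_coeff: "p \<in> rees_part J I \<Longrightarrow> coeff p n \<in> Nf J I n"
  by (auto simp: rees_part_def rees_def Nf_def)

lemma rideal_rees_part:
  assumes I: "is_ideal I"
  shows "rideal (rees J) (rees_part J I)"
proof -
  have "coeff (r * p) n \<in> I" if "p \<in> rees_part J I" for r p n
    unfolding coeff_mult using that
    by (intro ideal_sum[OF I]) (auto simp: rees_part_def intro: ideal_mult[OF I])
  then show ?thesis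
    unfolding rideal_def using rees_0[OF F] rees_add[OF F] rees_mult[OF F]
      ideal_0[OF I] ideal_add[OF I]
    by (auto simp: rees_part_def)
qed

lemma sub_ideal_rees_part:
  assumes I: "is_ideal I"
  shows "sub_ideal (rees J) (rees_part J I)"
  using rideal_rees_part[OF I] rees_part_sub unfolding sub_ideal_def rideal_def by blast

definition inipoly :: "'a \<Rightarrow> 'a poly" where
  "inipoly f = (if \<forall>n. f \<in> J n then 0 else monom f (LEAST n. f \<notin> J (Suc n)))"

lemma inipoly:
  shows "inipoly f \<in> rees J" and "phi J (inipoly f) = initial J f"
proof -
  have "inipoly f \<in> rees J \<and> phi J (inipoly f) = initial J f"
  proof (cases "\<forall>n. f \<in> J n")
    case True
    then show ?thesis unfolding inipoly_def initial_def gr_zero_def phi_def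
      using rees_0[OF F] coset_zero[OF J_ideal[OF F]] by simp
  next
    case False
    define n where "n = (LEAST n. f \<notin> J (Suc n))"
    have ex: "\<exists>n. f \<notin> J (Suc n)"
    proof -
      obtain k where "f \<notin> J k" using False by blast
      then have "k \<noteq> 0" using J_0[OF F] by (cases "k = 0") auto
      then have "Suc (k - 1) = k" by simp
      then show ?thesis using \<open>f \<notin> J k\<close> by (intro exI[of _ "k - 1"]) simp
    qed
    have fn: "f \<in> J n"
    proof (cases n)
      case 0 then show ?thesis using J_0[OF F] by simp
    next
      case (Suc k)
      then have "k < n" by simp
      then have "\<not> f \<notin> J (Suc k)" unfolding n_def by (rule not_less_Least)
      then show ?thesis using Suc by simp
    qed
    have "monom f n \<in> rees J" using fn rees_monom[OF F] by simp
    moreover have "phi J (monom f n) = initial J f"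
    proof -
      have ini: "initial J f = (\<lambda>m. if m = n then f +o J (Suc n) else J (Suc m))"
        unfolding initial_def by (subst if_not_P[OF False]) (simp add: Let_def n_def[symmetric])
      show ?thesis unfolding ini phi_def fun_eq_iff
        by (auto simp: coeff_monom coset_zero[OF J_ideal[OF F]])
    qed
    moreover have "inipoly f = monom f n" unfolding inipoly_def by (subst if_not_P[OF False]) (simp add: n_def)
    ultimately show ?thesis by simp
  qed
  then show "inipoly f \<in> rees J" and "phi J (inipoly f) = initial J f" by auto
qed

lemma initial_gr: "initial J f \<in> gr J"
proof -
  have "phi J (inipoly f) \<in> gr J" using inipoly(1) by (rule phi_gr[OF F])
  then show ?thesis using inipoly(2) by simp
qed

lemma inipoly_part: "is_ideal I \<Longrightarrow> f \<in> I \<Longrightarrow> inipoly f \<in> rees_part J I"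
proof -
  assume I: "is_ideal I" and f: "f \<in> I"
  show ?thesis
  proof (cases "\<forall>n. f \<in> J n")
    case True
    then show ?thesis unfolding inipoly_def rees_part_def using rees_0[OF F] by (simp add: ideal_0[OF I])
  next
    case False
    define n where "n = (LEAST n. f \<notin> J (Suc n))"
    have "monom f n \<in> rees J" using inipoly(1)[of f] False unfolding inipoly_def n_def by simp
    then have "f \<in> J n" using rees_monom[OF F] by simp
    then have "monom f n \<in> rees_part J I" using rees_part_monom[OF I] f by (simp add: Nf_def)
    then show ?thesis unfolding inipoly_def by (subst if_not_P[OF False]) (simp add: n_def)
  qed
qed

lemma inipoly_exact:
  assumes c: "c \<in> J k" "c \<notin> J (Suc k)"
  shows "inipoly c = monom c k"
proof -
  have nall: "\<not> (\<forall>n. c \<in> J n)" using c by blast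
  have "(LEAST n. c \<notin> J (Suc n)) = k"
  proof (rule Least_equality)
    show "c \<notin> J (Suc k)" using c by simp
  next
    fix y assume "c \<notin> J (Suc y)"
    then show "k \<le> y"
    proof (rule contrapos_np)
      assume "\<not> k \<le> y"
      then have "Suc y \<le> k" by simp
      then show "c \<in> J (Suc y)" using J_mono[OF F] c(1) by blast
    qed
  qed
  then show ?thesis unfolding inipoly_def by (subst if_not_P[OF nall]) simp
qed

end

lemma gr_gen_mono: "T \<subseteq> T' \<Longrightarrow> gr_gen J T \<subseteq> gr_gen J T'"
proof
  fix x assume TT: "T \<subseteq> T'" and "x \<in> gr_gen J T"
  then have "\<exists>T0 c. finite T0 \<and> T0 \<subseteq> T \<and> (\<forall>t\<in>T0. c t \<in> gr J)
      \<and> x = (\<lambda>n. (\<Sum>t\<in>T0. gr_mul J (c t) t n) + J (Suc n))" unfolding gr_gen_def by simp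
  then obtain T0 c where T0: "finite T0" "T0 \<subseteq> T" "\<forall>t\<in>T0. c t \<in> gr J"
      "x = (\<lambda>n. (\<Sum>t\<in>T0. gr_mul J (c t) t n) + J (Suc n))" by (elim exE conjE)
  have "T0 \<subseteq> T'" using T0(2) TT by (rule subset_trans)
  then show "x \<in> gr_gen J T'" unfolding gr_gen_def using T0(1,3,4)
    by (intro CollectI exI[of _ T0] exI[of _ c]) simp
qed

lemma rees_side:
  fixes J :: "nat \<Rightarrow> 'a::comm_ring_1 set"
  assumes F: "filtration J" and I: "is_ideal I"
    and m: "is_ideal m" "\<And>a. a \<in> m \<Longrightarrow> \<exists>b. (1 - a) * b = 1"
    and G: "rees_min_hgens J (rees_part J I) G"
  shows "degree ` G = {n. \<not> Nf J I n \<subseteq> Pset J I m n}"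
    and "homog G" and "\<And>n. Nf J I n \<subseteq> V J G n" and "\<And>g. g \<in> G \<Longrightarrow> lead_coeff g \<in> Nf J I (degree g)"
proof -
  let ?N = "rees_part J I"
  have GN: "G \<subseteq> ?N" and gen: "sub_gen (rees J) G = ?N"
    and hom0: "\<And>g. g \<in> G \<Longrightarrow> g \<noteq> 0 \<and> (\<exists>c n. g = monom c n)"
    and minim: "\<And>G'. G' \<subset> G \<Longrightarrow> sub_gen (rees J) G' \<noteq> ?N"
    using G unfolding rees_min_hgens_def by blast+
  show hom: "homog G" unfolding homog_def
  proof
    fix g assume g: "g \<in> G"
    then obtain c n where gc: "g = monom c n" "g \<noteq> 0" using hom0 by blast
    then have "c \<noteq> 0" by simp
    then show "g = monom (lead_coeff g) (degree g)" using gc by (simp add: degree_monom_eq)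
  qed
  show lc: "lead_coeff g \<in> Nf J I (degree g)" if "g \<in> G" for g
    using GN that rees_part_coeff[OF F] by blast
  show NV: "Nf J I n \<subseteq> V J G n" for n
  proof
    fix x assume "x \<in> Nf J I n"
    then have "monom x n \<in> sub_gen (rees J) G" using rees_part_monom[OF F I] gen by simp
    then have "coeff (monom x n) n \<in> V J G n" by (rule lemma_E[OF F hom])
    then show "x \<in> V J G n" by simp
  qed
  show "degree ` G = {n. \<not> Nf J I n \<subseteq> Pset J I m n}"
  proof (intro equalityI subsetI)
    fix n assume "n \<in> degree ` G"
    then obtain g0 where g0: "g0 \<in> G" "n = degree g0" by blast
    show "n \<in> {n. \<not> Nf J I n \<subseteq> Pset J I m n}"
    proof (rule ccontr)
      assume "n \<notin> {n. \<not> Nf J I n \<subseteq> Pset J I m n}"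
      then have P: "Nf J I (degree g0) \<subseteq> Pset J I m (degree g0) + {0}" using g0 by (simp add: set_plus_zero_right)
      let ?A = "sub_gen (rees J) (G - {g0})"
      have k1: "\<And>n. is_ideal ((\<lambda>n. {0::'a}) n)" by (simp add: ideal_zero_set)
      have k2: "monom z n \<in> ?A" if "z \<in> (\<lambda>n. {0::'a}) n" for n z
      proof -
        have "z = 0" using that by simp
        then show ?thesis using sub_gen_zero[of "rees J" "G - {g0}"] by simp
      qed
      have k3: "G - {g0} \<subseteq> ?A"
      proof
        fix g assume "g \<in> G - {g0}"
        then show "g \<in> ?A" by (rule sub_gen_rees_gen[OF F])
      qed
      have k4: "lead_coeff g \<in> Nf J I (degree g) + (\<lambda>n. {0::'a}) (degree g)" if "g \<in> G" for g
        using lc[OF that] by (simp add: set_plus_zero_right)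
      have k5: "Nf J I n \<subseteq> V J G n + (\<lambda>n. {0::'a}) n" for n
        using NV[of n] by (simp add: set_plus_zero_right)
      have P': "Nf J I (degree g0) \<subseteq> Pset J I m (degree g0) + (\<lambda>n. {0::'a}) (degree g0)"
        using P by simp
      have "g0 \<in> ?A"
        by (rule KEY[OF F I rideal_rees_sub_gen[OF F] k1 k2 hom g0(1) k3 k4 k5 m P'])
      have "G \<subseteq> ?A"
      proof
        fix g assume "g \<in> G"
        show "g \<in> ?A"
        proof (cases "g = g0")
          case True then show ?thesis using \<open>g0 \<in> ?A\<close> by simp
        next
          case False then have "g \<in> G - {g0}" using \<open>g \<in> G\<close> by simp
          then show ?thesis by (rule sub_gen_rees_gen[OF F])
        qed
      qed
      then have "sub_gen (rees J) G \<subseteq> ?A" by (rule sub_gen_least[OF rideal_rees_sub_gen[OF F]])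
      moreover have "?A \<subseteq> sub_gen (rees J) G" by (rule sub_gen_mono) blast
      ultimately have "?A = sub_gen (rees J) G" by (intro subset_antisym)
      then have "?A = ?N" using gen by simp
      moreover have "G - {g0} \<subset> G" using g0 by blast
      ultimately show False using minim[of "G - {g0}"] by simp
    qed
  next
    fix n assume n: "n \<in> {n. \<not> Nf J I n \<subseteq> Pset J I m n}"
    show "n \<in> degree ` G"
    proof (rule ccontr)
      assume "n \<notin> degree ` G"
      then have nd: "\<forall>g\<in>G. degree g \<noteq> n" by force
      have "Nf J I n \<subseteq> Pset J I m n + {0}"
      proof (rule R2g[where Z="\<lambda>n. {0}", OF F I _ _ hom])
        show "\<And>n. is_ideal {0}" by (rule ideal_zero_set)
        show "\<And>k n a z. a \<in> J k \<Longrightarrow> z \<in> {0} \<Longrightarrow> a * z \<in> {0}" by simp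
        show "\<And>g. g \<in> G \<Longrightarrow> lead_coeff g \<in> Nf J I (degree g) + {0}" using lc by (simp add: set_plus_zero_right)
        show "Nf J I n \<subseteq> V J G n + {0}" using NV by (simp add: set_plus_zero_right)
        show "\<forall>g\<in>G. degree g \<noteq> n" by (rule nd)
      qed
      then show False using n by (simp add: set_plus_zero_right)
    qed
  qed
qed

definition cof :: "(nat \<Rightarrow> 'a::comm_ring_1 set) \<Rightarrow> (nat \<Rightarrow> 'a set) \<Rightarrow> 'a" where
  "cof J h = (SOME c. c \<in> J (gr_deg J h) \<and> h (gr_deg J h) = c +o J (Suc (gr_deg J h)))"

definition rho1 :: "(nat \<Rightarrow> 'a::comm_ring_1 set) \<Rightarrow> (nat \<Rightarrow> 'a set) \<Rightarrow> 'a poly" where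
  "rho1 J h = monom (cof J h) (gr_deg J h)"

lemma homog_rep:
  fixes J :: "nat \<Rightarrow> 'a::comm_ring_1 set"
  assumes F: "filtration J" and h: "gr_homog J h d" and nz: "h \<noteq> gr_zero J"
  shows "gr_deg J h = d" and "cof J h \<in> J d" and "h d = cof J h +o J (Suc d)"
    and "cof J h \<notin> J (Suc d)" and "rho1 J h = monom (cof J h) d"
    and "rho1 J h \<in> rees J" and "phi J (rho1 J h) = h"
    and "degree (rho1 J h) = d" and "lead_coeff (rho1 J h) = cof J h"
proof -
  have hgr: "h \<in> gr J" and oth: "\<And>k. k \<noteq> d \<Longrightarrow> h k = J (Suc k)" using h by (auto simp: gr_homog_def)
  have hd: "h d \<noteq> J (Suc d)"
  proof
    assume hd0: "h d = J (Suc d)"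
    have "h = gr_zero J" unfolding gr_zero_def
    proof (rule ext)
      fix k show "h k = J (Suc k)" using oth hd0 by (cases "k = d") auto
    qed
    then show False using nz by simp
  qed
  show deg: "gr_deg J h = d" unfolding gr_deg_def
  proof (rule Least_equality)
    show "h d \<noteq> J (Suc d)" by (rule hd)
  next
    fix y assume "h y \<noteq> J (Suc y)"
    then have "y = d" using oth by blast
    then show "d \<le> y" by simp
  qed
  have ex: "\<exists>c. c \<in> J d \<and> h d = c +o J (Suc d)" using hgr unfolding gr_def by blast
  have c: "cof J h \<in> J d \<and> h d = cof J h +o J (Suc d)"
    unfolding cof_def deg by (rule someI_ex[OF ex])
  then show cJ: "cof J h \<in> J d" and hc: "h d = cof J h +o J (Suc d)" by auto
  show cn: "cof J h \<notin> J (Suc d)"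
    using hd hc coset_eq_ideal[OF J_ideal[OF F]] by auto
  then have c0: "cof J h \<noteq> 0" using ideal_0[OF J_ideal[OF F]] by auto
  show r: "rho1 J h = monom (cof J h) d" unfolding rho1_def deg ..
  show "rho1 J h \<in> rees J" unfolding r using rees_monom[OF F] cJ by simp
  show "phi J (rho1 J h) = h"
  proof
    fix k show "phi J (rho1 J h) k = h k"
    proof (cases "k = d")
      case True then show ?thesis using hc by (simp add: r phi_def)
    next
      case False then show ?thesis using oth[OF False] coset_zero[OF J_ideal[OF F]]
        by (simp add: r phi_def coeff_monom)
    qed
  qed
  show "degree (rho1 J h) = d" using c0 by (simp add: r degree_monom_eq)
  show "lead_coeff (rho1 J h) = cof J h" unfolding r by (rule lead_coeff_monom)
qed

lemma gr_side:
  fixes J :: "nat \<Rightarrow> 'a::comm_ring_1 set"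
  assumes F: "filtration J" and I: "is_ideal I"
    and m: "is_ideal m" "\<And>a. a \<in> m \<Longrightarrow> \<exists>b. (1 - a) * b = 1"
    and H: "gr_min_hgens J (in_F J I) H"
    and QN: "in_F J I = phi J ` rees_part J I"
  shows "gr_deg J ` H = {n. \<not> Nf J I n \<subseteq> Pset J I m n + J (Suc n)}"
proof -
  let ?Q = "in_F J I"
  let ?N = "rees_part J I"
  let ?G = "rho1 J ` H"
  have HQ: "H \<subseteq> ?Q" and gen: "gr_gen J H = ?Q"
    and hom0: "\<And>h. h \<in> H \<Longrightarrow> h \<noteq> gr_zero J \<and> (\<exists>d. gr_homog J h d)"
    and minim: "\<And>H'. H' \<subset> H \<Longrightarrow> gr_gen J H' \<noteq> ?Q"
    using H unfolding gr_min_hgens_def by blast+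
  have hr: "gr_deg J h = degree (rho1 J h) \<and> rho1 J h \<in> rees J \<and> phi J (rho1 J h) = h
      \<and> rho1 J h = monom (lead_coeff (rho1 J h)) (degree (rho1 J h))
      \<and> lead_coeff (rho1 J h) = cof J h
      \<and> h (gr_deg J h) = cof J h +o J (Suc (gr_deg J h))" if h: "h \<in> H" for h
  proof -
    obtain d where d: "gr_homog J h d" using hom0[OF h] by blast
    have nz: "h \<noteq> gr_zero J" using hom0[OF h] by blast
    note R = homog_rep[OF F d nz]
    show ?thesis using R by simp
  qed
  have rho_gr: "rho1 J h \<in> rees J \<and> phi J (rho1 J h) = h" if "h \<in> H'" "H' \<subseteq> H" for h H'
    using hr that by blast
  have ggH: "gr_gen J H' = phi J ` sub_gen (rees J) (rho1 J ` H')" if "H' \<subseteq> H" for H'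
    by (rule gr_gen_phi[OF F]) (use rho_gr that in blast)
  have hom: "homog ?G" unfolding homog_def
  proof
    fix g assume "g \<in> ?G"
    then obtain h where h: "h \<in> H" "g = rho1 J h" by blast
    have e: "rho1 J h = monom (lead_coeff (rho1 J h)) (degree (rho1 J h))" using hr[OF h(1)] by blast
    show "g = monom (lead_coeff g) (degree g)" unfolding h(2) by (rule e)
  qed
  have injr: "inj_on (rho1 J) H"
  proof (rule inj_onI)
    fix s t assume st: "s \<in> H" "t \<in> H" "rho1 J s = rho1 J t"
    have "s = phi J (rho1 J s)" using hr[OF st(1)] by simp
    also have "\<dots> = phi J (rho1 J t)" using st(3) by simp
    also have "\<dots> = t" using hr[OF st(2)] by simp
    finally show "s = t" .
  qed
  have cG: "lead_coeff g \<in> Nf J I (degree g) + J (Suc (degree g))" if g: "g \<in> ?G" for g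
  proof -
    obtain h where h: "h \<in> H" "g = rho1 J h" using g by blast
    let ?d = "gr_deg J h"
    have "h \<in> phi J ` ?N" using HQ h QN by blast
    then obtain q where q: "q \<in> ?N" "h = phi J q" by blast
    have e1: "h ?d = cof J h +o J (Suc ?d)" using hr[OF h(1)] by blast
    have e2: "h ?d = coeff q ?d +o J (Suc ?d)" using q(2) by (simp add: phi_def)
    have "coeff q ?d +o J (Suc ?d) = cof J h +o J (Suc ?d)" using e1 e2 by simp
    then have diff: "cof J h - coeff q ?d \<in> J (Suc ?d)"
      using coset_eq_iff[OF J_ideal[OF F]] by blast
    have cq: "coeff q ?d \<in> Nf J I ?d" using rees_part_coeff[OF F q(1)] .
    have "coeff q ?d + (cof J h - coeff q ?d) \<in> Nf J I ?d + J (Suc ?d)"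
      using cq diff by (rule set_plus_intro)
    then show ?thesis using hr[OF h(1)] h(2) by simp
  qed
  have NV: "Nf J I n \<subseteq> V J ?G n + J (Suc n)" for n
  proof
    fix x assume x: "x \<in> Nf J I n"
    then have "monom x n \<in> ?N" using rees_part_monom[OF F I] by simp
    then have "phi J (monom x n) \<in> ?Q" using QN by blast
    then have "phi J (monom x n) \<in> phi J ` sub_gen (rees J) ?G" using gen ggH[of H] by simp
    then obtain p where p: "p \<in> sub_gen (rees J) ?G" "phi J (monom x n) = phi J p" by auto
    then have "monom x n - p \<in> Kr J" using phi_eq[OF F] by blast
    then have "coeff (monom x n - p) n \<in> J (Suc n)" unfolding Kr_def by blast
    then have d: "x - coeff p n \<in> J (Suc n)" by simp
    have cp: "coeff p n \<in> V J ?G n" by (rule lemma_E[OF F hom p(1)])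
    have "coeff p n + (x - coeff p n) \<in> V J ?G n + J (Suc n)" using cp d by (rule set_plus_intro)
    then show "x \<in> V J ?G n + J (Suc n)" by simp
  qed
  show ?thesis
  proof (intro equalityI subsetI)
    fix n assume "n \<in> gr_deg J ` H"
    then obtain h0 where h0: "h0 \<in> H" "n = gr_deg J h0" by blast
    show "n \<in> {n. \<not> Nf J I n \<subseteq> Pset J I m n + J (Suc n)}"
    proof (rule ccontr)
      assume "n \<notin> {n. \<not> Nf J I n \<subseteq> Pset J I m n + J (Suc n)}"
      then have P0: "Nf J I n \<subseteq> Pset J I m n + J (Suc n)" by simp
      have dg: "degree (rho1 J h0) = n" using hr[OF h0(1)] h0(2) by simp
      let ?A = "sub_gen (rees J) (rho1 J ` (H - {h0})) + Kr J"
      have Ar: "rideal (rees J) ?A" by (rule rideal_plus[OF rideal_rees_sub_gen[OF F] rideal_Kr[OF F]])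
      have KA: "Kr J \<subseteq> ?A" by (rule plus_left_sub[OF sub_gen_zero])
      have SA: "sub_gen (rees J) (rho1 J ` (H - {h0})) \<subseteq> ?A" by (rule plus_right_sub[OF Kr_0[OF F]])
      have k1: "\<And>n. is_ideal ((\<lambda>n. J (Suc n)) n)" using J_ideal[OF F] by simp
      have k2: "monom z k \<in> ?A" if "z \<in> (\<lambda>n. J (Suc n)) k" for k z
        using Kr_monom[OF F, of z k] that KA by auto
      have k3: "?G - {rho1 J h0} \<subseteq> ?A"
      proof
        fix g assume "g \<in> ?G - {rho1 J h0}"
        then obtain h where "h \<in> H" "h \<noteq> h0" "g = rho1 J h" by blast
        then have "g \<in> rho1 J ` (H - {h0})" by blast
        then have "g \<in> sub_gen (rees J) (rho1 J ` (H - {h0}))" by (rule sub_gen_rees_gen[OF F])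
        then show "g \<in> ?A" using SA by blast
      qed
      have k4: "lead_coeff g \<in> Nf J I (degree g) + (\<lambda>n. J (Suc n)) (degree g)" if "g \<in> ?G" for g
        using cG[OF that] by simp
      have k5: "Nf J I k \<subseteq> V J ?G k + (\<lambda>n. J (Suc n)) k" for k
        using NV[of k] by simp
      have P': "Nf J I (degree (rho1 J h0)) \<subseteq> Pset J I m (degree (rho1 J h0)) + (\<lambda>n. J (Suc n)) (degree (rho1 J h0))"
        using P0 dg by simp
      have g0G: "rho1 J h0 \<in> ?G" using h0(1) by blast
      have "rho1 J h0 \<in> ?A"
        by (rule KEY[OF F I Ar k1 k2 hom g0G k3 k4 k5 m P'])
      have GA: "?G \<subseteq> ?A"
      proof
        fix g assume "g \<in> ?G"
        show "g \<in> ?A"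
        proof (cases "g = rho1 J h0")
          case True then show ?thesis using \<open>rho1 J h0 \<in> ?A\<close> by simp
        next
          case False then show ?thesis using k3 \<open>g \<in> ?G\<close> by blast
        qed
      qed
      have "sub_gen (rees J) ?G \<subseteq> ?A" by (rule sub_gen_least[OF Ar GA])
      then have "phi J ` sub_gen (rees J) ?G \<subseteq> phi J ` ?A" by (rule image_mono)
      also have "phi J ` ?A = phi J ` sub_gen (rees J) (rho1 J ` (H - {h0}))" by (rule phi_plus_Kr[OF F])
      also have "\<dots> = gr_gen J (H - {h0})" by (rule ggH[symmetric]) blast
      finally have "gr_gen J H \<subseteq> gr_gen J (H - {h0})" using ggH[of H] by simp
      moreover have "gr_gen J (H - {h0}) \<subseteq> gr_gen J H" by (rule gr_gen_mono) blast
      ultimately have "gr_gen J (H - {h0}) = ?Q" using gen by (simp add: subset_antisym)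
      moreover have "H - {h0} \<subset> H" using h0(1) by blast
      ultimately show False using minim[of "H - {h0}"] by simp
    qed
  next
    fix n assume n: "n \<in> {n. \<not> Nf J I n \<subseteq> Pset J I m n + J (Suc n)}"
    show "n \<in> gr_deg J ` H"
    proof (rule ccontr)
      assume nn: "n \<notin> gr_deg J ` H"
      have nd: "\<forall>g\<in>?G. degree g \<noteq> n"
      proof
        fix g assume "g \<in> ?G"
        then obtain h where h: "h \<in> H" "g = rho1 J h" by blast
        then have "degree g = gr_deg J h" using hr[OF h(1)] by simp
        then show "degree g \<noteq> n" using nn h(1) by blast
      qed
      have k1: "\<And>n. is_ideal ((\<lambda>n. J (Suc n)) n)" using J_ideal[OF F] by simp
      have kJ: "a * z \<in> (\<lambda>n. J (Suc n)) (k + l)" if "a \<in> J l" "z \<in> (\<lambda>n. J (Suc n)) k" for k l a z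
        using J_mult[OF F that(1), of z "Suc k"] that(2) by (simp add: add.commute)
      have k4: "lead_coeff g \<in> Nf J I (degree g) + (\<lambda>n. J (Suc n)) (degree g)" if "g \<in> ?G" for g
        using cG[OF that] by simp
      have k5: "Nf J I n \<subseteq> V J ?G n + (\<lambda>n. J (Suc n)) n" using NV[of n] by simp
      have "Nf J I n \<subseteq> Pset J I m n + (\<lambda>n. J (Suc n)) n"
        by (rule R2g[OF F I k1 kJ hom k4 k5 nd])
      then show False using n by simp
    qed
  qed
qed

lemma phi_sub_eq:
  assumes F: "filtration J" and XY: "X \<subseteq> Y + Kr J" and YX: "Y \<subseteq> X + Kr J"
  shows "phi J ` X = phi J ` Y"
proof -
  have "phi J ` X \<subseteq> phi J ` (Y + Kr J)" using XY by (rule image_mono)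
  moreover have "phi J ` Y \<subseteq> phi J ` (X + Kr J)" using YX by (rule image_mono)
  ultimately show ?thesis using phi_plus_Kr[OF F] by blast
qed

lemma plus_Kr_mono:
  assumes F: "filtration J" and x: "x \<in> {y} + Kr J" and y: "y \<in> Y"
  shows "x \<in> Y + Kr J"
proof -
  obtain a k where "a \<in> {y}" "k \<in> Kr J" "x = a + k" using x by (auto simp: set_plus_mem)
  then show ?thesis using y by (auto simp: set_plus_mem)
qed

lemma dm_eq:
  assumes "f ` G = S"
  shows "(if G = {} then 0 else Max (f ` G)) = (if S = {} then (0::nat) else Max S)"
  using assms by auto

theorem main:
  fixes J :: "nat \<Rightarrow> 'a::comm_ring_1 set" and I :: "'a set"
  assumes "noetherian_ring TYPE('a)" and LR: "local_ring TYPE('a)"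
    and NF: "noetherian_filtration J"
    and I: "is_ideal I"
  shows "ar J I = d_gr J (in_F J I)"
proof -
  have F: "filtration J" and NR: "noetherian_sub (rees J)" using NF by (auto simp: noetherian_filtration_def)
  obtain m :: "'a set" where m: "is_ideal m" "1 \<notin> m" "\<And>a. a \<in> m \<Longrightarrow> \<exists>b. (1 - a) * b = 1"
    "\<And>x. \<not> (\<exists>b. x * b = 1) \<Longrightarrow> x \<in> m" using local_max[OF LR] by blast
  have Jm: "J 1 \<subseteq> m" if J1: "J 1 \<noteq> UNIV"
  proof
    fix x assume x: "x \<in> J 1"
    show "x \<in> m"
    proof (rule m(4), rule notI)
      assume "\<exists>b. x * b = 1"
      then obtain b where "x * b = 1" by blast
      then have "1 \<in> J 1" using ideal_mult2[OF J_ideal[OF F] x, of b] by simp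
      then show False using J1 ideal_one[OF J_ideal[OF F]] by blast
    qed
  qed
  let ?N = "rees_part J I"
  have Nr: "rideal (rees J) ?N" by (rule rideal_rees_part[OF F I])
  obtain G0 where G0: "finite G0" "G0 \<subseteq> ?N" "sub_gen (rees J) G0 = ?N"
    using NR sub_ideal_rees_part[OF F I] unfolding noetherian_sub_def by blast
  define G1 where "G1 = (\<lambda>(p, k). monom (coeff p k) k) ` (SIGMA p:G0. {..degree p}) - {0}"
  have "finite (SIGMA p:G0. {..degree p})" using G0(1) by (intro finite_SigmaI) auto
  then have finG1: "finite G1" unfolding G1_def by (intro finite_Diff finite_imageI)
  have G1N: "G1 \<subseteq> ?N"
  proof
    fix g assume "g \<in> G1"
    then obtain pk where pk0: "pk \<in> (SIGMA p:G0. {..degree p})" "g = (\<lambda>(p, k). monom (coeff p k) k) pk"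
      unfolding G1_def by blast
    obtain p k where "pk = (p, k)" by (cases pk)
    then have pk: "p \<in> G0" "g = monom (coeff p k) k" using pk0 by auto
    have "coeff p k \<in> Nf J I k" using rees_part_coeff[OF F] pk(1) G0(2) by blast
    then show "g \<in> ?N" using pk(2) rees_part_monom[OF F I] by simp
  qed
  have G1hom: "g \<noteq> 0 \<and> (\<exists>c n. g = monom c n)" if gG: "g \<in> G1" for g
  proof -
    obtain pk where pk0: "pk \<in> (SIGMA p:G0. {..degree p})" "g = (\<lambda>(p, k). monom (coeff p k) k) pk"
      using gG unfolding G1_def by blast
    obtain p k where "pk = (p, k)" by (cases pk)
    then have "g = monom (coeff p k) k" using pk0 by auto
    moreover have "g \<noteq> 0" using gG unfolding G1_def by blast
    ultimately show ?thesis by blast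
  qed
  have genG1: "sub_gen (rees J) G1 = ?N"
  proof (rule subset_antisym)
    show "sub_gen (rees J) G1 \<subseteq> ?N" by (rule sub_gen_least[OF Nr G1N])
  next
    have "G0 \<subseteq> sub_gen (rees J) G1"
    proof
      fix p assume p: "p \<in> G0"
      show "p \<in> sub_gen (rees J) G1"
      proof (rule sum_monoms_in[OF F rideal_rees_sub_gen[OF F]])
        fix k
        show "monom (coeff p k) k \<in> sub_gen (rees J) G1"
        proof (cases "coeff p k = 0")
          case True then show ?thesis using sub_gen_zero by simp
        next
          case False
          then have "k \<le> degree p" by (rule le_degree)
          then have "(p, k) \<in> (SIGMA p:G0. {..degree p})" using p by simp
          then have "monom (coeff p k) k \<in> (\<lambda>(p, k). monom (coeff p k) k) ` (SIGMA p:G0. {..degree p})"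
            by (rule image_eqI[rotated]) simp
          then have "monom (coeff p k) k \<in> G1" unfolding G1_def using False by simp
          then show ?thesis by (rule sub_gen_rees_gen[OF F])
        qed
      qed
    qed
    then have "sub_gen (rees J) G0 \<subseteq> sub_gen (rees J) G1"
      by (rule sub_gen_least[OF rideal_rees_sub_gen[OF F]])
    then show "?N \<subseteq> sub_gen (rees J) G1" using G0(3) by simp
  qed
  obtain Gm where Gm: "Gm \<subseteq> G1" "sub_gen (rees J) Gm = ?N" "\<And>C. C \<subset> Gm \<Longrightarrow> sub_gen (rees J) C \<noteq> ?N"
    using min_subset[of G1 "\<lambda>G. sub_gen (rees J) G = ?N", OF finG1 genG1] by blast
  have Gmin: "rees_min_hgens J ?N Gm"
    unfolding rees_min_hgens_def
  proof (intro conjI ballI allI impI)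
    show "Gm \<subseteq> ?N" using Gm(1) G1N by (rule subset_trans)
    show "sub_gen (rees J) Gm = ?N" by (rule Gm(2))
  next
    fix g assume "g \<in> Gm" then show "g \<noteq> 0" using G1hom Gm(1) by blast
  next
    fix g assume "g \<in> Gm" then show "\<exists>c n. g = monom c n" using G1hom Gm(1) by blast
  next
    fix G' assume "G' \<subset> Gm" then show "sub_gen (rees J) G' \<noteq> ?N" by (rule Gm(3))
  qed
  have finGm: "finite Gm" using Gm(1) finG1 finite_subset by blast
  define Gs where "Gs = (SOME G. rees_min_hgens J ?N G)"
  have Gs: "rees_min_hgens J ?N Gs" unfolding Gs_def using Gmin by (rule someI)
  define S0 where "S0 = {n. \<not> Nf J I n \<subseteq> Pset J I m n}"
  define S1 where "S1 = {n. \<not> Nf J I n \<subseteq> Pset J I m n + J (Suc n)}"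
  have degGs: "degree ` Gs = S0" unfolding S0_def by (rule rees_side(1)[OF F I m(1) m(3) Gs])
  have ar: "ar J I = (if S0 = {} then 0 else Max S0)"
    unfolding ar_def d_rees_def Let_def Gs_def[symmetric] by (rule dm_eq[OF degGs])
  have comb: "(if S0 = {} then 0 else Max S0) = (if S1 = {} then 0 else Max S1)"
    unfolding S0_def S1_def
    by (rule COMB(2)[OF F I m(1) Jm finGm rees_side(2)[OF F I m(1) m(3) Gmin]
          rees_side(4)[OF F I m(1) m(3) Gmin] rees_side(3)[OF F I m(1) m(3) Gmin]])
  define \<rho>0 where "\<rho>0 t = (SOME p. p \<in> rees J \<and> phi J p = t)" for t
  have rho0: "\<rho>0 t \<in> rees J \<and> phi J (\<rho>0 t) = t" if "t \<in> gr J" for t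
  proof -
    have "\<exists>p. p \<in> rees J \<and> phi J p = t" using gr_surj[OF F that] by blast
    then show ?thesis unfolding \<rho>0_def by (rule someI_ex)
  qed
  have QN: "in_F J I = phi J ` ?N"
  proof -
    have T: "\<And>t. t \<in> initial J ` I \<Longrightarrow> \<rho>0 t \<in> rees J \<and> phi J (\<rho>0 t) = t"
      using rho0 initial_gr[OF F] by blast
    have "in_F J I = phi J ` sub_gen (rees J) (\<rho>0 ` initial J ` I)"
      unfolding in_F_def by (rule gr_gen_phi[OF F T])
    also have "\<dots> = phi J ` ?N"
    proof (rule phi_sub_eq[OF F])
      have NK: "rideal (rees J) (?N + Kr J)" by (rule rideal_plus[OF Nr rideal_Kr[OF F]])
      show "sub_gen (rees J) (\<rho>0 ` initial J ` I) \<subseteq> ?N + Kr J"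
      proof (rule sub_gen_least[OF NK], rule subsetI)
        fix x assume "x \<in> \<rho>0 ` initial J ` I"
        then obtain f where f: "f \<in> I" "x = \<rho>0 (initial J f)" by blast
        have "phi J x = phi J (inipoly J f)" using T f inipoly(2)[OF F, of f] by auto
        then have "x \<in> {inipoly J f} + Kr J" by (rule phi_eq_plus[OF F])
        then show "x \<in> ?N + Kr J" using plus_Kr_mono[OF F _ inipoly_part[OF F I f(1)]] by blast
      qed
    next
      let ?B = "sub_gen (rees J) (\<rho>0 ` initial J ` I) + Kr J"
      have B: "rideal (rees J) ?B" by (rule rideal_plus[OF rideal_rees_sub_gen[OF F] rideal_Kr[OF F]])
      show "?N \<subseteq> ?B"
      proof
        fix p assume p: "p \<in> ?N"
        show "p \<in> ?B"
        proof (rule sum_monoms_in[OF F B])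
          fix k
          let ?c = "coeff p k"
          have c: "?c \<in> Nf J I k" using rees_part_coeff[OF F p] .
          show "monom ?c k \<in> ?B"
          proof (cases "?c \<in> J (Suc k)")
            case True
            then have "monom ?c k \<in> Kr J" by (rule Kr_monom[OF F])
            then show ?thesis using plus_left_sub[OF sub_gen_zero] by blast
          next
            case False
            have ini: "inipoly J ?c = monom ?c k" using c False by (intro inipoly_exact[OF F]) (auto simp: Nf_def)
            have cI: "?c \<in> I" using c by (simp add: Nf_def)
            have "phi J (monom ?c k) = initial J ?c" using inipoly(2)[OF F, of ?c] ini by simp
            also have "\<dots> = phi J (\<rho>0 (initial J ?c))" using T cI by auto
            finally have "monom ?c k \<in> {\<rho>0 (initial J ?c)} + Kr J" by (rule phi_eq_plus[OF F])
            moreover have "\<rho>0 (initial J ?c) \<in> sub_gen (rees J) (\<rho>0 ` initial J ` I)"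
              using cI by (intro sub_gen_rees_gen[OF F]) blast
            ultimately show ?thesis by (rule plus_Kr_mono[OF F])
          qed
        qed
      qed
    qed
    finally show ?thesis .
  qed
  define H1 where "H1 = phi J ` Gm - {gr_zero J}"
  have finH1: "finite H1" unfolding H1_def using finGm by simp
  have gz: "gr_zero J = phi J 0" unfolding gr_zero_def phi_def using coset_zero[OF J_ideal[OF F]] by simp
  have H1hom: "h \<noteq> gr_zero J \<and> (\<exists>d. gr_homog J h d)" if h: "h \<in> H1" for h
  proof -
    have hG: "h \<in> phi J ` Gm" and hz: "h \<noteq> gr_zero J" using h unfolding H1_def by auto
    from hG obtain g where g: "g \<in> Gm" "h = phi J g" by (rule imageE)
    have "g \<in> G1" using g(1) Gm(1) by (rule subsetD[rotated])
    then have "\<exists>c n. g = monom c n" using G1hom by blast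
    then obtain c d where cd: "g = monom c d" by (elim exE)
    have "g \<in> ?N" using \<open>g \<in> G1\<close> G1N by (rule subsetD[rotated])
    then have gr: "g \<in> rees J" using rees_part_sub[OF F, of I] by (rule subsetD[rotated])
    have hgr: "h \<in> gr J" using phi_gr[OF F gr] g(2) by simp
    have oth: "h k = J (Suc k)" if kd: "k \<noteq> d" for k
    proof -
      have "h k = coeff g k +o J (Suc k)" using g(2) by (simp add: phi_def)
      moreover have "coeff g k = 0" using kd unfolding cd by (simp add: coeff_monom)
      ultimately show ?thesis using coset_zero[OF J_ideal[OF F]] by simp
    qed
    have "gr_homog J h d" unfolding gr_homog_def using hgr oth by blast
    then show ?thesis using hz by blast
  qed
  have H1gr: "H1 \<subseteq> gr J" using H1hom by (auto simp: gr_homog_def)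
  have genH1: "gr_gen J H1 = in_F J I"
  proof -
    have T: "\<And>t. t \<in> H1 \<Longrightarrow> \<rho>0 t \<in> rees J \<and> phi J (\<rho>0 t) = t" using rho0 H1gr by blast
    have "gr_gen J H1 = phi J ` sub_gen (rees J) (\<rho>0 ` H1)" by (rule gr_gen_phi[OF F T])
    also have "\<dots> = phi J ` ?N"
    proof (rule phi_sub_eq[OF F])
      have NK: "rideal (rees J) (?N + Kr J)" by (rule rideal_plus[OF Nr rideal_Kr[OF F]])
      show "sub_gen (rees J) (\<rho>0 ` H1) \<subseteq> ?N + Kr J"
      proof (rule sub_gen_least[OF NK], rule subsetI)
        fix x assume "x \<in> \<rho>0 ` H1"
        then obtain g where g: "g \<in> Gm" "x = \<rho>0 (phi J g)" "phi J g \<in> H1" unfolding H1_def by blast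
        have "phi J x = phi J g" using T g by auto
        then have "x \<in> {g} + Kr J" by (rule phi_eq_plus[OF F])
        moreover have "g \<in> ?N" using g(1) Gm(1) G1N by blast
        ultimately show "x \<in> ?N + Kr J" by (rule plus_Kr_mono[OF F])
      qed
    next
      let ?B = "sub_gen (rees J) (\<rho>0 ` H1) + Kr J"
      have B: "rideal (rees J) ?B" by (rule rideal_plus[OF rideal_rees_sub_gen[OF F] rideal_Kr[OF F]])
      have "Gm \<subseteq> ?B"
      proof
        fix g assume g: "g \<in> Gm"
        show "g \<in> ?B"
        proof (cases "phi J g = gr_zero J")
          case True
          then have "g \<in> {0} + Kr J" using gz by (intro phi_eq_plus[OF F]) simp
          then have "g \<in> Kr J" by (simp add: set_plus_mem)
          then show ?thesis using plus_left_sub[OF sub_gen_zero] by blast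
        next
          case False
          then have H: "phi J g \<in> H1" unfolding H1_def using g by blast
          then have "phi J g = phi J (\<rho>0 (phi J g))" using T by auto
          then have "g \<in> {\<rho>0 (phi J g)} + Kr J" by (rule phi_eq_plus[OF F])
          moreover have "\<rho>0 (phi J g) \<in> sub_gen (rees J) (\<rho>0 ` H1)"
            using H by (intro sub_gen_rees_gen[OF F]) blast
          ultimately show ?thesis by (rule plus_Kr_mono[OF F])
        qed
      qed
      then have "sub_gen (rees J) Gm \<subseteq> ?B" by (rule sub_gen_least[OF B])
      then show "?N \<subseteq> ?B" using Gm(2) by simp
    qed
    finally show ?thesis using QN by simp
  qed
  obtain Hm where Hm: "Hm \<subseteq> H1" "gr_gen J Hm = in_F J I" "\<And>C. C \<subset> Hm \<Longrightarrow> gr_gen J C \<noteq> in_F J I"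
    using min_subset[of H1 "\<lambda>H. gr_gen J H = in_F J I", OF finH1 genH1] by blast
  have H1Q: "H1 \<subseteq> in_F J I"
  proof
    fix h assume "h \<in> H1"
    then obtain g where "g \<in> Gm" "h = phi J g" unfolding H1_def by blast
    then show "h \<in> in_F J I" using QN Gm(1) G1N by blast
  qed
  have Hmin: "gr_min_hgens J (in_F J I) Hm"
    unfolding gr_min_hgens_def
  proof (intro conjI ballI allI impI)
    show "Hm \<subseteq> in_F J I" using Hm(1) H1Q by (rule subset_trans)
    show "gr_gen J Hm = in_F J I" by (rule Hm(2))
  next
    fix h assume "h \<in> Hm" then show "h \<noteq> gr_zero J" using H1hom Hm(1) by blast
  next
    fix h assume "h \<in> Hm" then show "\<exists>d. gr_homog J h d" using H1hom Hm(1) by blast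
  next
    fix H' assume "H' \<subset> Hm" then show "gr_gen J H' \<noteq> in_F J I" by (rule Hm(3))
  qed
  define Hs where "Hs = (SOME H. gr_min_hgens J (in_F J I) H)"
  have Hs: "gr_min_hgens J (in_F J I) Hs" unfolding Hs_def using Hmin by (rule someI)
  have degHs: "gr_deg J ` Hs = S1" unfolding S1_def by (rule gr_side[OF F I m(1) m(3) Hs QN])
  have dg: "d_gr J (in_F J I) = (if S1 = {} then 0 else Max S1)"
    unfolding d_gr_def Let_def Hs_def[symmetric] by (rule dm_eq[OF degHs])
  show ?thesis using ar comb dg by simp
qed

theorem proposition5p5:
  fixes J :: "nat \<Rightarrow> 'a::comm_ring_1 set" and I :: "'a set"
  assumes "noetherian_ring TYPE('a)" and "local_ring TYPE('a)"
    and "noetherian_filtration J"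
    and "is_ideal I"
  shows "ar J I = d_gr J (in_F J I)"
  using assms by (rule main)

end
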